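(* Let $D>0$ and suppose $A-((\kappa+1)I+\kappa M)D-I\gamma>0$. Let $\mu\in\mathcal{C}([0,\infty);\mathcal{P}_2^\nu(\mathbb{R}^2))$ be a global measure-valued solution of $\partial_t\mu+\partial_x(F[\mu]\mu)=0$ such that, for some $t_*>0$, $\operatorname{diam}_x(\operatorname{supp}\mu_t)\le D$ for all $t\in[0,t_*]$. Let $s_0:=x_c(0)$, $s_*:=x_c(t_* )$, let $\tau:[s_0,s_*]\to[0,t_*]$ be the inverse of the strictly increasing map $t\mapsto x_c(t)$ on $[0,t_*]$, and set $\tilde X(s,x,\omega):=X(\tau(s),x,\omega)$. Then for all $s\in(s_0,s_* )$ and all $(x,\omega),(x',\omega')\in\operatorname{supp}(\mu_0)$, with $t=\tau(s)$, $$\frac{d}{ds}\big(\tilde X(s,x,\omega)-\tilde X(s,x',\omega')\big)\le\frac{\partial_xF[\tilde\mu_t](x_c(t),\omega_c)}{F[\tilde\mu_t](x_c(t),\omega_c)}\big(\tilde X(s,x,\omega)-\tilde X(s,x',\omega')\big)+C_2(\kappa,\gamma,D).$$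
   Context: $\nu$ is a Borel probability measure on $\mathbb{R}$ with finite second moment and bounded support $\Omega$; $\gamma:=\sup_{\omega,\omega'\in\Omega}|\omega-\omega'|$, $\omega_c:=\int\omega\,\nu(d\omega)$. $\mathcal{P}_2^\nu(\mathbb{R}^2)$: Borel probability measures on $\mathbb{R}^2$ with finite second moment and $\omega$-marginal $\nu$. $W_1$: 1-Wasserstein distance. $\operatorname{diam}_x(\operatorname{supp}\mu):=\sup\{|x-x'|:(x,\omega),(x',\omega')\in\operatorname{supp}\mu\}$. $F$ assigns to each $\mu\in\mathcal{P}_2^\nu(\mathbb{R}^2)$ a function $F[\mu]:\mathbb{R}^2\to\mathbb{R}$; $\partial_x,\partial_\omega$ are partial derivatives in the spatial arguments with $\mu$ fixed. With constants $A,B,I,M,\kappa>0$: (A1) $\sup_{(x,\omega)\in\mathbb{R}\times\Omega}|\partial_x^\alpha F[\mu](x,\omega)-\partial_x^\alpha F[\mu'](x,\omega)|\le\kappa MW_1(\mu,\mu')$ for $\alpha=0,1$; (A2) $F[\mu]\in C^2(\mathbb{R}^2)$, $\|\partial_xF[\mu]\|_\infty\le\kappa I$, $\|\partial_x^2F[\mu]\|_\infty\le\kappa I$, $\|\partial_\omega F[\mu]\|_\infty\le I$; (A3) $F[(\tau_{2\pi})_\sharp\mu](x+2\pi,\omega)=F[\mu](x,\omega)$ with $\tau_{2\pi}(x,\omega)=(x+2\pi,\omega)$; (A4) $\inf_xF[\delta_x\otimes\nu](x,\omega_c)\ge A$; (A5) $\int_0^{2\pi}\frac{\partial_xF[\delta_x\otimes\nu](x,\omega_c)}{F[\delta_x\otimes\nu](x,\omega_c)}dx\le-\kappa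 B$. A global measure-valued solution with initial datum $\mu_0\in\mathcal{P}_2^\nu(\mathbb{R}^2)$ is $\mu\in\mathcal{C}([0,\infty);\mathcal{P}_2(\mathbb{R}^2))$ (with $\omega$-marginal $\nu$) such that $t\mapsto\int\varphi d\mu_t$ is continuous for $\varphi\in\mathcal{C}_0(\mathbb{R}^2)$ and $\int\varphi(t)d\mu_t=\int\varphi(0)d\mu_0+\int_0^t\int(\partial_s\varphi+F[\mu_s]\partial_x\varphi)d\mu_sds$ for all $\varphi\in\mathcal{C}^1_0([0,\infty)\times\mathbb{R}^2)$. Characteristic flow: $\frac{d}{dt}X(t,x,\omega)=F[\mu_t](X(t,x,\omega),\omega)$, $X(0,x,\omega)=x$. $x_c(t):=\int x\,\mu_t(dx,d\omega)$, $\tilde\mu_t:=\delta_{x_c(t)}\otimes\nu$. $C_1:=\kappa(M+I)D^2+2I\gamma$, $C_2(\kappa,\gamma,D):=\frac{C_1}{A}+\frac{(((\kappa+1)I+\kappa M)D+I\gamma)(\kappa ID+C_1)}{A(A-((\kappa+1)I+\kappa M)D-I\gamma)}$. *)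

theory Defs
  imports "HOL-Analysis.Analysis" "HOL-Probability.Probability"
begin

definition msupp :: "'a::metric_space measure \<Rightarrow> 'a set" where
  "msupp M = {z. \<forall>e>0. emeasure M (ball z e) \<noteq> 0}"

(* P_2^nu(R^2): Borel probability measures on R^2, finite second moment, omega-marginal nu *)
definition P2nu :: "real measure \<Rightarrow> (real \<times> real) measure \<Rightarrow> bool" where
  "P2nu \<nu> \<mu> \<longleftrightarrow> sets \<mu> = sets borel \<and> prob_space \<mu>
     \<and> integrable \<mu> (\<lambda>(x,w). x\<^sup>2 + w\<^sup>2) \<and> distr \<mu> borel snd = \<nu>"

definition couplings :: "'a::metric_space measure \<Rightarrow> 'a measure \<Rightarrow> ('a \<times> 'a) measure set" where
  "couplings \<mu> \<mu>' = {\<pi>. sets \<pi> = sets borel \<and> distr \<pi> borel fst = \<mu> \<and> distr \<pi> borel snd = \<mu>'}"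

definition W1 :: "'a::metric_space measure \<Rightarrow> 'a measure \<Rightarrow> ennreal" where
  "W1 \<mu> \<mu>' = (INF \<pi>\<in>couplings \<mu> \<mu>'. \<integral>\<^sup>+ p. ennreal (dist (fst p) (snd p)) \<partial>\<pi>)"

definition W2sq :: "'a::metric_space measure \<Rightarrow> 'a measure \<Rightarrow> ennreal" where
  "W2sq \<mu> \<mu>' = (INF \<pi>\<in>couplings \<mu> \<mu>'. \<integral>\<^sup>+ p. ennreal ((dist (fst p) (snd p))\<^sup>2) \<partial>\<pi>)"

definition Fx :: "('m \<Rightarrow> real \<Rightarrow> real \<Rightarrow> real) \<Rightarrow> 'm \<Rightarrow> real \<Rightarrow> real \<Rightarrow> real" where
  "Fx F \<mu> x w = deriv (\<lambda>y. F \<mu> y w) x"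

definition Fxx :: "('m \<Rightarrow> real \<Rightarrow> real \<Rightarrow> real) \<Rightarrow> 'm \<Rightarrow> real \<Rightarrow> real \<Rightarrow> real" where
  "Fxx F \<mu> x w = deriv (\<lambda>y. Fx F \<mu> y w) x"

definition Fw :: "('m \<Rightarrow> real \<Rightarrow> real \<Rightarrow> real) \<Rightarrow> 'm \<Rightarrow> real \<Rightarrow> real \<Rightarrow> real" where
  "Fw F \<mu> x w = deriv (\<lambda>v. F \<mu> x v) w"

definition C2_R2 :: "(real \<Rightarrow> real \<Rightarrow> real) \<Rightarrow> bool" where
  "C2_R2 f \<longleftrightarrow> (\<exists>f1 f2 f11 f12 f21 f22.
     (\<forall>x w. ((\<lambda>y. f y w) has_real_derivative f1 x w) (at x)
          \<and> ((\<lambda>v. f x v) has_real_derivative f2 x w) (at w)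
          \<and> ((\<lambda>y. f1 y w) has_real_derivative f11 x w) (at x)
          \<and> ((\<lambda>v. f1 x v) has_real_derivative f12 x w) (at w)
          \<and> ((\<lambda>y. f2 y w) has_real_derivative f21 x w) (at x)
          \<and> ((\<lambda>v. f2 x v) has_real_derivative f22 x w) (at w))
     \<and> continuous_on UNIV (\<lambda>(x,w). f x w)
     \<and> continuous_on UNIV (\<lambda>(x,w). f1 x w) \<and> continuous_on UNIV (\<lambda>(x,w). f2 x w)
     \<and> continuous_on UNIV (\<lambda>(x,w). f11 x w) \<and> continuous_on UNIV (\<lambda>(x,w). f12 x w)
     \<and> continuous_on UNIV (\<lambda>(x,w). f21 x w) \<and> continuous_on UNIV (\<lambda>(x,w). f22 x w))"

definition test_fun :: "(real \<Rightarrow> real \<Rightarrow> real \<Rightarrow> real) \<Rightarrow> (real \<Rightarrow> real \<Rightarrow> real \<Rightarrow> real)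
    \<Rightarrow> (real \<Rightarrow> real \<Rightarrow> real \<Rightarrow> real) \<Rightarrow> bool" where
  "test_fun \<phi> \<phi>t \<phi>x \<longleftrightarrow> (\<exists>\<phi>w.
     (\<forall>t\<ge>0. \<forall>x w. ((\<lambda>s. \<phi> s x w) has_real_derivative \<phi>t t x w) (at t within {0..})
          \<and> ((\<lambda>y. \<phi> t y w) has_real_derivative \<phi>x t x w) (at x)
          \<and> ((\<lambda>v. \<phi> t x v) has_real_derivative \<phi>w t x w) (at w))
     \<and> continuous_on ({0..} \<times> UNIV) (\<lambda>(t,x,w). \<phi> t x w)
     \<and> continuous_on ({0..} \<times> UNIV) (\<lambda>(t,x,w). \<phi>t t x w)
     \<and> continuous_on ({0..} \<times> UNIV) (\<lambda>(t,x,w). \<phi>x t x w)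
     \<and> continuous_on ({0..} \<times> UNIV) (\<lambda>(t,x,w). \<phi>w t x w)
     \<and> (\<exists>R. \<forall>t x w. R \<le> t \<or> R \<le> \<bar>x\<bar> \<or> R \<le> \<bar>w\<bar> \<longrightarrow> \<phi> t x w = 0))"

definition mv_solution :: "real measure \<Rightarrow> ((real \<times> real) measure \<Rightarrow> real \<Rightarrow> real \<Rightarrow> real)
    \<Rightarrow> (real \<Rightarrow> (real \<times> real) measure) \<Rightarrow> bool" where
  "mv_solution \<nu> F \<mu> \<longleftrightarrow>
     (\<forall>t\<ge>0. P2nu \<nu> (\<mu> t))
   \<and> (\<forall>t\<ge>0. ((\<lambda>s. W2sq (\<mu> s) (\<mu> t)) \<longlongrightarrow> 0) (at t within {0..}))
   \<and> (\<forall>f :: real \<times> real \<Rightarrow> real. continuous_on UNIV f \<and> (f \<longlongrightarrow> 0) at_infinity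
        \<longrightarrow> continuous_on {0..} (\<lambda>t. integral\<^sup>L (\<mu> t) f))
   \<and> (\<forall>\<phi> \<phi>t \<phi>x. test_fun \<phi> \<phi>t \<phi>x \<longrightarrow> (\<forall>t\<ge>0.
        integral\<^sup>L (\<mu> t) (\<lambda>(x,w). \<phi> t x w)
        = integral\<^sup>L (\<mu> 0) (\<lambda>(x,w). \<phi> 0 x w)
          + integral {0..t} (\<lambda>s. integral\<^sup>L (\<mu> s)
               (\<lambda>(x,w). \<phi>t s x w + F (\<mu> s) x w * \<phi>x s x w))))"

definition C1const :: "real \<Rightarrow> real \<Rightarrow> real \<Rightarrow> real \<Rightarrow> real \<Rightarrow> real" where
  "C1const \<kappa> M I \<gamma> D = \<kappa> * (M + I) * D\<^sup>2 + 2 * I * \<gamma>"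

definition C2const :: "real \<Rightarrow> real \<Rightarrow> real \<Rightarrow> real \<Rightarrow> real \<Rightarrow> real \<Rightarrow> real" where
  "C2const A \<kappa> M I \<gamma> D =
     C1const \<kappa> M I \<gamma> D / A
     + ((((\<kappa> + 1) * I + \<kappa> * M) * D + I * \<gamma>) * (\<kappa> * I * D + C1const \<kappa> M I \<gamma> D))
       / (A * (A - ((\<kappa> + 1) * I + \<kappa> * M) * D - I * \<gamma>))"

end

theory Submission
  imports Defs
begin


lemma msupp_AE:
  fixes M :: "'a::{metric_space,second_countable_topology} measure"
  assumes sM: "sets M = sets borel"
  shows "AE z in M. z \<in> msupp M"
proof -
  define \<F> where "\<F> = {ball z e | z e. e > 0 \<and> emeasure M (ball z e) = 0}"
  have op: "\<And>S. S \<in> \<F> \<Longrightarrow> open S" unfolding \<F>_def by auto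
  obtain \<F>' where F': "\<F>' \<subseteq> \<F>" "countable \<F>'" "\<Union>\<F>' = \<Union>\<F>"
    using Lindelof[OF op] by blast
  have null: "\<Union>\<F>' \<in> null_sets M"
  proof -
    have "(\<Union>S\<in>\<F>'. S) \<in> null_sets M"
    proof (rule null_sets_UN')
      show "countable \<F>'" by fact
      fix S assume "S \<in> \<F>'"
      then have "S \<in> \<F>" using F' by auto
      then obtain z e where "S = ball z e" "emeasure M (ball z e) = 0" unfolding \<F>_def by auto
      moreover have "ball z e \<in> sets M" using sM by simp
      ultimately show "S \<in> null_sets M" by auto
    qed
    then show ?thesis by simp
  qed
  show ?thesis
  proof (rule AE_I'[OF null])
    show "{x \<in> space M. \<not> x \<in> msupp M} \<subseteq> \<Union> \<F>'"
    proof
      fix x assume "x \<in> {x \<in> space M. \<not> x \<in> msupp M}"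
      then obtain e where "e > 0" "emeasure M (ball x e) = 0" unfolding msupp_def by auto
      then have "ball x e \<in> \<F>" unfolding \<F>_def by auto
      then have "x \<in> \<Union>\<F>" using \<open>e>0\<close> by (metis UnionI centre_in_ball)
      then show "x \<in> \<Union>\<F>'" using F' by auto
    qed
  qed
qed

lemma msupp_nonempty:
  fixes M :: "'a::{metric_space,second_countable_topology} measure"
  assumes sM: "sets M = sets borel" and P: "prob_space M"
  shows "msupp M \<noteq> {}"
proof
  assume "msupp M = {}"
  with msupp_AE[OF sM] have "AE z in M. False" by simp
  with P show False by (simp add: prob_space.AE_False)
qed

lemma P2nu_msupp_snd:
  assumes P: "P2nu \<nu> \<mu>" and p: "p \<in> msupp \<mu>"
  shows "snd p \<in> msupp \<nu>"
  unfolding msupp_def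
proof (intro CollectI allI impI)
  fix e :: real assume e: "e > 0"
  have s: "sets \<mu> = sets borel" and nu: "distr \<mu> borel snd = \<nu>" using P unfolding P2nu_def by auto
  have meas: "snd \<in> \<mu> \<rightarrow>\<^sub>M borel"
    unfolding measurable_cong_sets[OF s refl] by (intro borel_measurable_continuous_onI continuous_intros)
  have "emeasure \<nu> (ball (snd p) e) = emeasure \<mu> (snd -` ball (snd p) e \<inter> space \<mu>)"
    unfolding nu[symmetric] by (rule emeasure_distr[OF meas]) simp
  also have "\<dots> \<ge> emeasure \<mu> (ball p e)"
  proof (rule emeasure_mono)
    show "ball p e \<subseteq> snd -` ball (snd p) e \<inter> space \<mu>"
      using s sets_eq_imp_space_eq[OF s]
      by (auto simp: dist_commute) (metis dist_commute dist_snd_le le_less_trans snd_conv)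
    show "snd -` ball (snd p) e \<inter> space \<mu> \<in> sets \<mu>" using meas by measurable
  qed
  finally show "emeasure \<nu> (ball (snd p) e) \<noteq> 0" using p e unfolding msupp_def
    by (auto simp: le_zero_eq)
qed


lemma meas_borel_cont:
  fixes f :: "'a::topological_space \<Rightarrow> 'b::topological_space"
  assumes "sets M = sets borel" "continuous_on UNIV f"
  shows "f \<in> borel_measurable M"
  unfolding measurable_cong_sets[OF assms(1) refl]
  by (rule borel_measurable_continuous_onI[OF assms(2)])

lemma ret_prod:
  assumes s: "sets \<nu> = sets borel" and P: "prob_space \<nu>"
  shows "return borel c \<Otimes>\<^sub>M \<nu> = distr \<nu> borel (\<lambda>w. (c::real, w::real))"
proof (rule pair_measure_eqI)
  show "sigma_finite_measure (return borel c)"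
    by (simp add: prob_space_imp_sigma_finite prob_space_return)
  show "sigma_finite_measure \<nu>" using P by (simp add: prob_space_imp_sigma_finite)
  have m: "(\<lambda>w. (c, w)) \<in> \<nu> \<rightarrow>\<^sub>M borel"
    by (rule meas_borel_cont[OF s]) (intro continuous_intros)
  show "sets (return borel c \<Otimes>\<^sub>M \<nu>) = sets (distr \<nu> borel (\<lambda>w. (c, w)))"
  proof -
    have "sets (return borel c \<Otimes>\<^sub>M \<nu>) = sets (borel \<Otimes>\<^sub>M (borel::real measure))"
      by (rule sets_pair_measure_cong) (simp_all add: s)
    also have "\<dots> = sets (borel :: (real \<times> real) measure)" by (metis borel_prod)
    finally show ?thesis by simp
  qed
  fix A B assume A: "A \<in> sets (return borel c)" and B: "B \<in> sets \<nu>"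
  have "emeasure (distr \<nu> borel (\<lambda>w. (c, w))) (A \<times> B) = emeasure \<nu> ((\<lambda>w. (c, w)) -` (A \<times> B) \<inter> space \<nu>)"
  proof (rule emeasure_distr[OF m])
    have "A \<times> B \<in> sets (borel \<Otimes>\<^sub>M (borel::real measure))" using A B s by auto
    then show "A \<times> B \<in> sets borel" by (metis borel_prod)
  qed
  also have "\<dots> = (if c \<in> A then emeasure \<nu> B else 0)"
    using B sets.sets_into_space[OF B] by (auto intro!: arg_cong[where f="emeasure \<nu>"])
  also have "\<dots> = emeasure (return borel c) A * emeasure \<nu> B"
    using A by (simp add: emeasure_return)
  finally show "emeasure (return borel c) A * emeasure \<nu> B = emeasure (distr \<nu> borel (\<lambda>w. (c, w))) (A \<times> B)"
    by simp
qed

lemma P2nu_dirac: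
  assumes s: "sets \<nu> = sets borel" and P: "prob_space \<nu>" and i: "integrable \<nu> (\<lambda>w. w\<^sup>2)"
  shows "P2nu \<nu> (return borel (c::real) \<Otimes>\<^sub>M \<nu>)"
proof -
  have m: "(\<lambda>w. (c, w)) \<in> \<nu> \<rightarrow>\<^sub>M borel"
    by (rule meas_borel_cont[OF s]) (intro continuous_intros)
  interpret prob_space \<nu> by fact
  have 1: "sets (distr \<nu> borel (\<lambda>w. (c, w))) = sets borel" by simp
  have 2: "prob_space (distr \<nu> borel (\<lambda>w. (c, w)))" by (rule prob_space_distr[OF m])
  have 3: "integrable (distr \<nu> borel (\<lambda>w. (c, w))) (\<lambda>(x,w). x\<^sup>2 + w\<^sup>2)"
    apply (subst integrable_distr_eq[OF m])
     apply (intro borel_measurable_continuous_onI) apply (simp add: case_prod_beta') apply (intro continuous_intros)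
    using i by simp
  have 4: "distr (distr \<nu> borel (\<lambda>w. (c, w))) borel snd = \<nu>"
    apply (subst distr_distr[OF _ m])
     apply (intro borel_measurable_continuous_onI continuous_intros)
    using distr_id2[OF s[symmetric]] by (simp add: comp_def)
  show ?thesis unfolding ret_prod[OF s P] P2nu_def using 1 2 3 4 by simp
qed

lemma abs_integral_le_AE:
  fixes f :: "'a \<Rightarrow> real"
  assumes P: "prob_space M" and ae: "AE x in M. \<bar>f x\<bar> \<le> B"
  shows "\<bar>integral\<^sup>L M f\<bar> \<le> B"
proof -
  interpret prob_space M by fact
  have B0: "0 \<le> B"
  proof (rule ccontr)
    assume "\<not> 0 \<le> B"
    have "AE x in M. False" using ae by eventually_elim (use \<open>\<not> 0 \<le> B\<close> in \<open>smt (verit) abs_ge_zero\<close>)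
    then show False by simp
  qed
  show ?thesis
  proof (cases "integrable M f")
    case True
    have "\<bar>integral\<^sup>L M f\<bar> \<le> integral\<^sup>L M (\<lambda>x. \<bar>f x\<bar>)" by (rule integral_abs_bound)
    also have "\<dots> \<le> integral\<^sup>L M (\<lambda>x. B)"
      by (rule integral_mono_AE) (use True ae in auto)
    also have "\<dots> = B" by (simp add: prob_space)
    finally show ?thesis .
  next
    case False then show ?thesis using B0 by (simp add: not_integrable_integral_eq)
  qed
qed

lemma integral_ge_AE:
  fixes f :: "'a \<Rightarrow> real"
  assumes P: "prob_space M" and i: "integrable M f" and ae: "AE x in M. c \<le> f x"
  shows "c \<le> integral\<^sup>L M f"
proof -
  interpret prob_space M by fact
  have "c = integral\<^sup>L M (\<lambda>x. c)" by (simp add: prob_space)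
  also have "\<dots> \<le> integral\<^sup>L M f" by (rule integral_mono_AE) (use i ae in auto)
  finally show ?thesis .
qed

lemma integral_le_AE:
  fixes f :: "'a \<Rightarrow> real"
  assumes P: "prob_space M" and i: "integrable M f" and ae: "AE x in M. f x \<le> c"
  shows "integral\<^sup>L M f \<le> c"
proof -
  interpret prob_space M by fact
  have "integral\<^sup>L M f \<le> integral\<^sup>L M (\<lambda>x. c)" by (rule integral_mono_AE) (use i ae in auto)
  also have "\<dots> = c" by (simp add: prob_space)
  finally show ?thesis .
qed

lemma integrable_cont_bound:
  fixes f :: "'a::topological_space \<Rightarrow> real"
  assumes P: "prob_space M" and s: "sets M = sets borel" and c: "continuous_on UNIV f"
    and ae: "AE x in M. \<bar>f x\<bar> \<le> B"
  shows "integrable M f"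
proof -
  interpret prob_space M by fact
  show ?thesis
    by (rule integrable_const_bound[where B=B]) (use ae meas_borel_cont[OF s c] in auto)
qed


definition sq0 :: "real \<Rightarrow> real" where "sq0 z = (max 0 z)\<^sup>2"

lemma sq0_deriv: "(sq0 has_real_derivative 2 * max 0 z) (at z)"
proof -
  consider "z > 0" | "z < 0" | "z = 0" by linarith
  then show ?thesis
  proof cases
    case 1
    have "((\<lambda>y. y\<^sup>2) has_real_derivative 2 * max 0 z) (at z)"
      using 1 by (auto intro!: derivative_eq_intros)
    then show ?thesis
      by (rule has_field_derivative_transform_within_open[where S="{0<..}"])
         (use 1 in \<open>auto simp: sq0_def\<close>)
  next
    case 2
    have "((\<lambda>y. 0) has_real_derivative 2 * max 0 z) (at z)" using 2 by simp
    then show ?thesis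
      by (rule has_field_derivative_transform_within_open[where S="{..<0}"])
         (use 2 in \<open>auto simp: sq0_def\<close>)
  next
    case 3
    have "((\<lambda>h. (sq0 (z + h) - sq0 z) / h) \<longlongrightarrow> 0) (at 0)"
    proof (rule Lim_null_comparison)
      have "norm ((sq0 (z + h) - sq0 z) / h) \<le> \<bar>h\<bar>" for h
        using 3 by (cases "h \<le> 0") (auto simp: sq0_def power2_eq_square)
      then show "\<forall>\<^sub>F h in at 0. norm ((sq0 (z + h) - sq0 z) / h) \<le> \<bar>h\<bar>"
        by (simp add: always_eventually)
      show "((\<lambda>h. \<bar>h\<bar>) \<longlongrightarrow> 0) (at (0::real))"
        using tendsto_rabs[OF tendsto_ident_at[of "0::real" UNIV]] by simp
    qed
    then show ?thesis using 3 by (simp add: has_field_derivative_iff)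
  qed
qed

definition S :: "real \<Rightarrow> real" where
  "S z = 2 * sq0 z - 4 * sq0 (z - 1/2) + 2 * sq0 (z - 1)"
definition S' :: "real \<Rightarrow> real" where
  "S' z = 4 * max 0 z - 8 * max 0 (z - 1/2) + 4 * max 0 (z - 1)"

lemma S_deriv: "(S has_real_derivative S' z) (at z)"
proof -
  have d1: "(sq0 has_real_derivative 2*max 0 z) (at z)" by (rule sq0_deriv)
  have d2: "((\<lambda>x. sq0 (x - 1/2)) has_real_derivative (2*max 0 (z-1/2)) * 1) (at z)"
    by (rule DERIV_chain2[OF sq0_deriv]) (auto intro!: derivative_eq_intros)
  have d3: "((\<lambda>x. sq0 (x - 1)) has_real_derivative (2*max 0 (z-1)) * 1) (at z)"
    by (rule DERIV_chain2[OF sq0_deriv]) (auto intro!: derivative_eq_intros)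
  have "((\<lambda>z. 2 * sq0 z - 4 * sq0 (z - 1/2) + 2 * sq0 (z - 1)) has_real_derivative
        2 * (2 * max 0 z) - 4 * ((2 * max 0 (z - 1/2)) * 1) + 2 * ((2 * max 0 (z - 1)) * 1)) (at z)"
    by (intro DERIV_add DERIV_diff DERIV_cmult d1 d2 d3)
  then show ?thesis unfolding S_def[abs_def] S'_def by simp
qed

lemma S_deriv_gen: "((\<lambda>x. S (g x)) has_real_derivative S' (g x) * g') (at x within s)"
  if "(g has_real_derivative g') (at x within s)" for g g' x s
  using DERIV_chain2[OF S_deriv that] .

lemma S_cont: "continuous_on A S"
  unfolding S_def sq0_def by (intro continuous_intros)
lemma S'_cont: "continuous_on A S'"
  unfolding S'_def by (intro continuous_intros)

lemma S_le0: "z \<le> 0 \<Longrightarrow> S z = 0"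
  unfolding S_def sq0_def by auto
lemma S_ge1: "z \<ge> 1 \<Longrightarrow> S z = 1"
  unfolding S_def sq0_def by (auto simp: power2_eq_square algebra_simps)
lemma S'_le0: "z \<le> 0 \<Longrightarrow> S' z = 0"
  unfolding S'_def by auto
lemma S'_ge1: "z \<ge> 1 \<Longrightarrow> S' z = 0"
  unfolding S'_def by auto
lemma S'_nonneg: "S' z \<ge> 0"
  unfolding S'_def by (auto simp: max_def)
lemma S_nonneg: "S z \<ge> 0"
proof -
  consider "z \<le> 0" | "0 \<le> z \<and> z < 1/2" | "1/2 \<le> z \<and> z \<le> 1" | "z \<ge> 1" by linarith
  then show ?thesis
  proof cases
    case 2 then show ?thesis unfolding S_def sq0_def by (auto simp: max_def)
  next
    case 3
    then have "S z = 1 - 2 * (1 - z)\<^sup>2" unfolding S_def sq0_def by (auto simp: max_def power2_eq_square algebra_simps)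
    moreover have "(1 - z) * (1 - z) \<le> 1/2 * (1/2)" using 3 by (intro mult_mono) auto
    then have "(1 - z)\<^sup>2 \<le> 1/4" by (simp add: power2_eq_square)
    ultimately show ?thesis by simp
  qed (auto simp: S_le0 S_ge1)
qed
lemma S_le1: "S z \<le> 1"
proof -
  consider "z \<le> 0" | "0 \<le> z \<and> z < 1/2" | "1/2 \<le> z \<and> z \<le> 1" | "z \<ge> 1" by linarith
  then show ?thesis
  proof cases
    case 2
    then have "S z = 2 * z\<^sup>2" unfolding S_def sq0_def by (auto simp: max_def)
    moreover have "z * z \<le> 1/2 * (1/2)" using 2 by (intro mult_mono) auto
    then have "z\<^sup>2 \<le> 1/4" by (simp add: power2_eq_square)
    ultimately show ?thesis by simp
  next
    case 3
    then have "S z = 1 - 2 * (1 - z)\<^sup>2" unfolding S_def sq0_def by (auto simp: max_def power2_eq_square algebra_simps)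
    then show ?thesis by simp
  qed (auto simp: S_le0 S_ge1)
qed


lemma lip_deriv:
  fixes f :: "real \<Rightarrow> real"
  assumes d: "\<And>y. (f has_real_derivative f' y) (at y)" and b: "\<And>y. \<bar>f' y\<bar> \<le> K"
  shows "\<bar>f b - f a\<bar> \<le> K * \<bar>b - a\<bar>"
proof -
  have *: "\<bar>f v - f u\<bar> \<le> K * \<bar>v - u\<bar>" if uv: "u < v" for u v
  proof -
    obtain z where "f v - f u = (v - u) * f' z" using MVT2[of u v f f'] d uv by blast
    then have "\<bar>f v - f u\<bar> = \<bar>v - u\<bar> * \<bar>f' z\<bar>" by (simp add: abs_mult)
    also have "\<dots> \<le> \<bar>v - u\<bar> * K" by (rule mult_left_mono[OF b]) simp
    finally show ?thesis by (simp add: mult.commute)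
  qed
  consider "a < b" | "a = b" | "b < a" by linarith
  then show ?thesis
  proof cases
    case 3 then show ?thesis using *[OF 3] by (simp add: abs_minus_commute)
  qed (use * in auto)
qed

lemma mvt_between:
  fixes f :: "real \<Rightarrow> real"
  assumes d: "\<And>y. (f has_real_derivative f' y) (at y)"
  shows "\<exists>z. min a b \<le> z \<and> z \<le> max a b \<and> f b - f a = (b - a) * f' z"
proof -
  consider "a < b" | "a = b" | "b < a" by linarith
  then show ?thesis
  proof cases
    case 1
    obtain z where "a < z" "z < b" "f b - f a = (b - a) * f' z" using MVT2[of a b f f'] d 1 by blast
    then show ?thesis by (intro exI[of _ z]) auto
  next
    case 2 then show ?thesis by auto
  next
    case 3
    obtain z where "a > z" "z > b" "f a - f b = (a - b) * f' z" using MVT2[of b a f f'] d 3 by blast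
    then show ?thesis by (intro exI[of _ z]) (auto simp: algebra_simps)
  qed
qed

locale setting =
  fixes \<nu> :: "real measure"
    and F :: "(real \<times> real) measure \<Rightarrow> real \<Rightarrow> real \<Rightarrow> real"
    and \<mu> :: "real \<Rightarrow> (real \<times> real) measure"
    and X :: "real \<Rightarrow> real \<Rightarrow> real \<Rightarrow> real"
    and A B I M \<kappa> D ts :: real
    and \<Omega> :: "real set" and \<gamma> \<omega>c :: real and xc :: "real \<Rightarrow> real"
  assumes \<Omega>_def: "\<Omega> = msupp \<nu>"
    and \<gamma>_def: "\<gamma> = diameter (msupp \<nu>)"
    and \<omega>c_def: "\<omega>c = integral\<^sup>L \<nu> (\<lambda>w. w)"
    and xc_def: "xc = (\<lambda>t. integral\<^sup>L (\<mu> t) fst)"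
  assumes nu: "prob_space \<nu>" "sets \<nu> = sets borel" "integrable \<nu> (\<lambda>w. w\<^sup>2)" "bounded \<Omega>"
    and pos: "A > 0" "B > 0" "I > 0" "M > 0" "\<kappa> > 0"
    and A1_0: "\<And>\<mu>1 \<mu>2 x w. P2nu \<nu> \<mu>1 \<Longrightarrow> P2nu \<nu> \<mu>2 \<Longrightarrow> w \<in> \<Omega> \<Longrightarrow>
                 ennreal \<bar>F \<mu>1 x w - F \<mu>2 x w\<bar> \<le> ennreal (\<kappa> * M) * W1 \<mu>1 \<mu>2"
    and A1_1: "\<And>\<mu>1 \<mu>2 x w. P2nu \<nu> \<mu>1 \<Longrightarrow> P2nu \<nu> \<mu>2 \<Longrightarrow> w \<in> \<Omega> \<Longrightarrow>
                 ennreal \<bar>Fx F \<mu>1 x w - Fx F \<mu>2 x w\<bar> \<le> ennreal (\<kappa> * M) * W1 \<mu>1 \<mu>2"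
    and A2_C2: "\<And>\<mu>1. P2nu \<nu> \<mu>1 \<Longrightarrow> C2_R2 (F \<mu>1)"
    and A2_x: "\<And>\<mu>1 x w. P2nu \<nu> \<mu>1 \<Longrightarrow> \<bar>Fx F \<mu>1 x w\<bar> \<le> \<kappa> * I"
    and A2_xx: "\<And>\<mu>1 x w. P2nu \<nu> \<mu>1 \<Longrightarrow> \<bar>Fxx F \<mu>1 x w\<bar> \<le> \<kappa> * I"
    and A2_w: "\<And>\<mu>1 x w. P2nu \<nu> \<mu>1 \<Longrightarrow> \<bar>Fw F \<mu>1 x w\<bar> \<le> I"
    and A4: "\<And>x. F (return borel x \<Otimes>\<^sub>M \<nu>) x \<omega>c \<ge> A"
    and D: "D > 0" "A - ((\<kappa> + 1) * I + \<kappa> * M) * D - I * \<gamma> > 0"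
    and sol: "mv_solution \<nu> F \<mu>"
    and ts: "ts > 0"
    and diam: "\<And>t p q. t \<in> {0..ts} \<Longrightarrow> p \<in> msupp (\<mu> t) \<Longrightarrow> q \<in> msupp (\<mu> t) \<Longrightarrow>
                 \<bar>fst p - fst q\<bar> \<le> D"
    and flow: "\<And>t x w. t \<ge> 0 \<Longrightarrow>
                 ((\<lambda>t. X t x w) has_real_derivative F (\<mu> t) (X t x w) w) (at t within {0..})"
    and flow0: "\<And>x w. X 0 x w = x"
begin

lemma C2_facts:
  assumes "P2nu \<nu> m"
  shows "((\<lambda>y. F m y w) has_real_derivative Fx F m x w) (at x)"
    and "((\<lambda>v. F m x v) has_real_derivative Fw F m x w) (at w)"
    and "((\<lambda>y. Fx F m y w) has_real_derivative Fxx F m x w) (at x)"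
    and "continuous_on UNIV (\<lambda>(x,w). F m x w)"
proof -
  obtain f1 f2 f11 f12 f21 f22 where
    d: "\<And>x w. ((\<lambda>y. F m y w) has_real_derivative f1 x w) (at x)
          \<and> ((\<lambda>v. F m x v) has_real_derivative f2 x w) (at w)
          \<and> ((\<lambda>y. f1 y w) has_real_derivative f11 x w) (at x)"
    and c: "continuous_on UNIV (\<lambda>(x,w). F m x w)"
    using A2_C2[OF assms] unfolding C2_R2_def by metis
  have e1: "Fx F m x w = f1 x w" for x w unfolding Fx_def using d by (metis DERIV_imp_deriv)
  have e2: "Fw F m x w = f2 x w" for x w unfolding Fw_def using d by (metis DERIV_imp_deriv)
  have e3: "Fxx F m x w = f11 x w" for x w unfolding Fxx_def e1[abs_def] using d by (metis DERIV_imp_deriv)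
  show "((\<lambda>y. F m y w) has_real_derivative Fx F m x w) (at x)" unfolding e1 using d by blast
  show "((\<lambda>v. F m x v) has_real_derivative Fw F m x w) (at w)" unfolding e2 using d by blast
  show "((\<lambda>y. Fx F m y w) has_real_derivative Fxx F m x w) (at x)" unfolding e1 e3 using d by blast
  show "continuous_on UNIV (\<lambda>(x,w). F m x w)" by fact
qed

lemma F_lip_x:
  assumes "P2nu \<nu> m" shows "\<bar>F m b w - F m a w\<bar> \<le> \<kappa> * I * \<bar>b - a\<bar>"
  by (rule lip_deriv[OF C2_facts(1)[OF assms] A2_x[OF assms]])

lemma F_lip_w:
  assumes "P2nu \<nu> m" shows "\<bar>F m x b - F m x a\<bar> \<le> I * \<bar>b - a\<bar>"
  by (rule lip_deriv[OF C2_facts(2)[OF assms] A2_w[OF assms]])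

lemma Fx_lip_x:
  assumes "P2nu \<nu> m" shows "\<bar>Fx F m b w - Fx F m a w\<bar> \<le> \<kappa> * I * \<bar>b - a\<bar>"
  by (rule lip_deriv[OF C2_facts(3)[OF assms] A2_xx[OF assms]])

lemma F_lip2:
  assumes "P2nu \<nu> m"
  shows "\<bar>F m y v - F m y' v'\<bar> \<le> \<kappa> * I * \<bar>y - y'\<bar> + I * \<bar>v - v'\<bar>"
  using F_lip_x[OF assms, of y v y'] F_lip_w[OF assms, of y' v v'] by linarith

lemma F_cont_comp:
  assumes "P2nu \<nu> m" "continuous_on U f" "continuous_on U g"
  shows "continuous_on U (\<lambda>x. F m (f x) (g x))"
proof -
  have "continuous_on U ((\<lambda>(x,w). F m x w) \<circ> (\<lambda>x. (f x, g x)))"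
    by (rule continuous_on_compose) (auto intro: continuous_on_subset[OF C2_facts(4)[OF assms(1)]] continuous_intros assms)
  then show ?thesis by (simp add: comp_def)
qed

lemma mu_P2: "t \<ge> 0 \<Longrightarrow> P2nu \<nu> (\<mu> t)"
  using sol unfolding mv_solution_def by auto

lemma mu_basic:
  assumes "t \<ge> 0"
  shows "prob_space (\<mu> t)" "sets (\<mu> t) = sets borel" "distr (\<mu> t) borel snd = \<nu>"
  using mu_P2[OF assms] unfolding P2nu_def by auto

lemma mu_AE: assumes "t \<ge> 0" shows "AE p in \<mu> t. p \<in> msupp (\<mu> t) \<and> snd p \<in> \<Omega>"
  using msupp_AE[OF mu_basic(2)[OF assms]] P2nu_msupp_snd[OF mu_P2[OF assms]]
  unfolding \<Omega>_def by (auto elim: AE_mp)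

lemma supp_snd: "t \<ge> 0 \<Longrightarrow> p \<in> msupp (\<mu> t) \<Longrightarrow> snd p \<in> \<Omega>"
  using P2nu_msupp_snd[OF mu_P2] unfolding \<Omega>_def by auto

lemma nu_AE: "AE w in \<nu>. w \<in> \<Omega>"
  using msupp_AE[OF nu(2)] unfolding \<Omega>_def .

lemma Omega_diam: "w \<in> \<Omega> \<Longrightarrow> w' \<in> \<Omega> \<Longrightarrow> \<bar>w - w'\<bar> \<le> \<gamma>"
  using diameter_bounded_bound[OF nu(4)] unfolding \<gamma>_def \<Omega>_def[symmetric] by (simp add: dist_real_def)

lemma gamma_nonneg: "\<gamma> \<ge> 0"
proof -
  obtain w0 where w0: "w0 \<in> \<Omega>" using msupp_nonempty[OF nu(2,1)] unfolding \<Omega>_def by auto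
  show ?thesis using Omega_diam[OF w0 w0] by simp
qed

lemma nu_int_id: "integrable \<nu> (\<lambda>w. w)"
proof -
  interpret prob_space \<nu> by (rule nu(1))
  obtain w0 where w0: "w0 \<in> \<Omega>" using msupp_nonempty[OF nu(2,1)] unfolding \<Omega>_def by auto
  show ?thesis
  proof (rule integrable_cont_bound[OF nu(1,2), where B="\<bar>w0\<bar> + \<gamma>"])
    show "continuous_on UNIV (\<lambda>w::real. w)" by (intro continuous_intros)
    show "AE x in \<nu>. \<bar>x\<bar> \<le> \<bar>w0\<bar> + \<gamma>"
      using nu_AE by eventually_elim (use Omega_diam[OF _ w0] in force)
  qed
qed

lemma omega_c_close: assumes "w \<in> \<Omega>" shows "\<bar>w - \<omega>c\<bar> \<le> \<gamma>"
proof -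
  interpret prob_space \<nu> by (rule nu(1))
  have "w - \<omega>c = integral\<^sup>L \<nu> (\<lambda>v. w - v)"
    unfolding \<omega>c_def using nu_int_id by (simp add: prob_space)
  also have "\<bar>\<dots>\<bar> \<le> \<gamma>"
    by (rule abs_integral_le_AE[OF nu(1)]) (use nu_AE Omega_diam[OF assms] in \<open>auto elim: AE_mp\<close>)
  finally show ?thesis .
qed

end


lemma coupling_space:
  fixes \<mu>1 \<mu>2 :: "('a::{metric_space,second_countable_topology}) measure"
  assumes "\<pi> \<in> couplings \<mu>1 \<mu>2" "prob_space \<mu>1"
  shows "emeasure \<pi> (space \<pi>) = 1"
proof -
  have s: "sets \<pi> = sets borel" and d: "distr \<pi> borel fst = \<mu>1" using assms unfolding couplings_def by auto
  have m: "fst \<in> \<pi> \<rightarrow>\<^sub>M borel" by (rule meas_borel_cont[OF s]) (intro continuous_intros)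
  have "emeasure \<mu>1 (space \<mu>1) = 1" using assms(2) by (simp add: prob_space.emeasure_space_1)
  also have "emeasure \<mu>1 (space \<mu>1) = emeasure \<pi> (fst -` space \<mu>1 \<inter> space \<pi>)"
    unfolding d[symmetric] by (subst emeasure_distr[OF m]) auto
  also have "fst -` space \<mu>1 \<inter> space \<pi> = space \<pi>"
    unfolding d[symmetric] by auto
  finally show ?thesis by simp
qed

lemma W1_le_W2:
  fixes \<mu>1 \<mu>2 :: "('a::{metric_space,second_countable_topology}) measure"
  assumes W: "W2sq \<mu>1 \<mu>2 < ennreal (e\<^sup>2)" and e: "e > 0" and P: "prob_space \<mu>1"
  shows "W1 \<mu>1 \<mu>2 \<le> ennreal e"
proof -
  obtain \<pi> where pi: "\<pi> \<in> couplings \<mu>1 \<mu>2" and lt: "(\<integral>\<^sup>+ p. ennreal ((dist (fst p) (snd p))\<^sup>2) \<partial>\<pi>) < ennreal (e\<^sup>2)"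
    using W unfolding W2sq_def by (auto simp: INF_less_iff)
  have s: "sets \<pi> = sets borel" using pi unfolding couplings_def by auto
  have sp: "emeasure \<pi> (space \<pi>) = 1" by (rule coupling_space[OF pi P])
  have m1: "(\<lambda>p. ennreal ((dist (fst p) (snd p))\<^sup>2)) \<in> borel_measurable \<pi>"
    by (intro measurable_compose[OF _ measurable_ennreal] meas_borel_cont[OF s] continuous_intros)
  have "W1 \<mu>1 \<mu>2 \<le> (\<integral>\<^sup>+ p. ennreal (dist (fst p) (snd p)) \<partial>\<pi>)"
    unfolding W1_def by (rule INF_lower[OF pi])
  also have "\<dots> \<le> (\<integral>\<^sup>+ p. ennreal (1/(2*e)) * ennreal ((dist (fst p) (snd p))\<^sup>2) + ennreal (e/2) \<partial>\<pi>)"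
  proof (rule nn_integral_mono)
    fix p
    let ?d = "dist (fst p) (snd p)"
    have "0 \<le> (?d - e)\<^sup>2" by simp
    then have "?d \<le> 1/(2*e) * ?d\<^sup>2 + e/2" using e
      by (simp add: field_simps power2_eq_square)
    then have "ennreal ?d \<le> ennreal (1/(2*e) * ?d\<^sup>2 + e/2)" by (rule ennreal_leI)
    also have "\<dots> = ennreal (1/(2*e)) * ennreal (?d\<^sup>2) + ennreal (e/2)"
      using e by (subst ennreal_plus) (auto simp: ennreal_mult[symmetric])
    finally show "ennreal ?d \<le> ennreal (1/(2*e)) * ennreal (?d\<^sup>2) + ennreal (e/2)" .
  qed
  also have "\<dots> = ennreal (1/(2*e)) * (\<integral>\<^sup>+ p. ennreal ((dist (fst p) (snd p))\<^sup>2) \<partial>\<pi>) + ennreal (e/2)"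
    using m1 sp by (subst nn_integral_add) (auto simp: nn_integral_cmult)
  also have "\<dots> \<le> ennreal (1/(2*e)) * ennreal (e\<^sup>2) + ennreal (e/2)"
    using lt by (intro add_right_mono mult_left_mono) auto
  also have "\<dots> = ennreal e"
    using e by (simp add: ennreal_mult[symmetric] ennreal_plus[symmetric] power2_eq_square del: ennreal_plus)
  finally show ?thesis .
qed

context setting begin

lemma W1_cont:
  assumes t: "t \<ge> 0" and e: "e > 0"
  shows "eventually (\<lambda>s. s \<ge> 0 \<and> W1 (\<mu> s) (\<mu> t) \<le> ennreal e) (at t within {0..})"
proof -
  have "((\<lambda>s. W2sq (\<mu> s) (\<mu> t)) \<longlongrightarrow> 0) (at t within {0..})"
    using sol t unfolding mv_solution_def by auto
  then have ev: "eventually (\<lambda>s. W2sq (\<mu> s) (\<mu> t) < ennreal (e\<^sup>2)) (at t within {0..})"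
    by (rule order_tendstoD) (use e in simp)
  have ev0: "eventually (\<lambda>s. s \<in> {0..}) (at t within {0..})"
    by (simp add: eventually_at_filter)
  show ?thesis using ev ev0
    by eventually_elim (use W1_le_W2 e mu_basic(1) in auto)
qed

lemma A1_real:
  assumes "P2nu \<nu> m1" "P2nu \<nu> m2" "W1 m1 m2 \<le> ennreal e" "e \<ge> 0" "w \<in> \<Omega>"
  shows "\<bar>F m1 x w - F m2 x w\<bar> \<le> \<kappa> * M * e"
proof -
  have "ennreal \<bar>F m1 x w - F m2 x w\<bar> \<le> ennreal (\<kappa> * M) * W1 m1 m2" by (rule A1_0[OF assms(1,2,5)])
  also have "\<dots> \<le> ennreal (\<kappa> * M) * ennreal e" by (rule mult_left_mono[OF assms(3)]) simp
  also have "\<dots> = ennreal (\<kappa> * M * e)" using pos assms(4) by (simp add: ennreal_mult)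
  finally show ?thesis using pos assms(4) by (subst (asm) ennreal_le_iff) auto
qed

lemma A1x_real:
  assumes "P2nu \<nu> m1" "P2nu \<nu> m2" "W1 m1 m2 \<le> ennreal e" "e \<ge> 0" "w \<in> \<Omega>"
  shows "\<bar>Fx F m1 x w - Fx F m2 x w\<bar> \<le> \<kappa> * M * e"
proof -
  have "ennreal \<bar>Fx F m1 x w - Fx F m2 x w\<bar> \<le> ennreal (\<kappa> * M) * W1 m1 m2" by (rule A1_1[OF assms(1,2,5)])
  also have "\<dots> \<le> ennreal (\<kappa> * M) * ennreal e" by (rule mult_left_mono[OF assms(3)]) simp
  also have "\<dots> = ennreal (\<kappa> * M * e)" using pos assms(4) by (simp add: ennreal_mult)
  finally show ?thesis using pos assms(4) by (subst (asm) ennreal_le_iff) auto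
qed

lemma supp_xc:
  assumes t: "t \<in> {0..ts}" and p: "p \<in> msupp (\<mu> t)"
  shows "\<bar>fst p - xc t\<bar> \<le> D"
proof -
  have t0: "t \<ge> 0" using t by auto
  have ae: "AE q in \<mu> t. \<bar>fst q - fst p\<bar> \<le> D"
    using mu_AE[OF t0] by eventually_elim (use diam[OF t _ p] in auto)
  have int: "integrable (\<mu> t) fst"
    by (rule integrable_cont_bound[OF mu_basic(1,2)[OF t0], where B="\<bar>fst p\<bar> + D"])
       (use ae in \<open>auto intro!: continuous_intros elim!: AE_mp\<close>)
  interpret prob_space "\<mu> t" by (rule mu_basic(1)[OF t0])
  have "xc t - fst p = integral\<^sup>L (\<mu> t) (\<lambda>q. fst q - fst p)"
    unfolding xc_def using int by (simp add: prob_space)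
  also have "\<bar>\<dots>\<bar> \<le> D" by (rule abs_integral_le_AE[OF mu_basic(1)[OF t0] ae])
  finally show ?thesis by (simp add: abs_minus_commute)
qed

definition mut :: "real \<Rightarrow> (real \<times> real) measure" where
  "mut t = return borel (xc t) \<Otimes>\<^sub>M \<nu>"

lemma mut_P2: "P2nu \<nu> (mut t)"
  unfolding mut_def by (rule P2nu_dirac[OF nu(2,1,3)])

lemma W1_mut:
  assumes t: "t \<in> {0..ts}"
  shows "W1 (\<mu> t) (mut t) \<le> ennreal D"
proof -
  have t0: "t \<ge> 0" using t by auto
  have s: "sets (\<mu> t) = sets borel" by (rule mu_basic(2)[OF t0])
  define g where "g = (\<lambda>p::real\<times>real. (p, (xc t, snd p)))"
  have mg: "g \<in> \<mu> t \<rightarrow>\<^sub>M borel" unfolding g_def by (rule meas_borel_cont[OF s]) (intro continuous_intros)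
  define \<pi> where "\<pi> = distr (\<mu> t) borel g"
  have c: "\<pi> \<in> couplings (\<mu> t) (mut t)"
    unfolding couplings_def
  proof (intro CollectI conjI)
    show "sets \<pi> = sets borel" unfolding \<pi>_def by simp
    show "distr \<pi> borel fst = \<mu> t"
      unfolding \<pi>_def
      by (subst distr_distr[OF _ mg]) (auto simp: g_def comp_def distr_id2[OF s[symmetric]] intro!: borel_measurable_continuous_onI continuous_intros)
    have "distr \<pi> borel snd = distr (\<mu> t) borel (\<lambda>p. (xc t, snd p))"
      unfolding \<pi>_def
      by (subst distr_distr[OF _ mg]) (auto simp: g_def comp_def intro!: borel_measurable_continuous_onI continuous_intros)
    also have "\<dots> = distr (distr (\<mu> t) borel snd) borel (\<lambda>w. (xc t, w))"
      by (subst distr_distr) (auto simp: comp_def intro!: borel_measurable_continuous_onI continuous_intros meas_borel_cont[OF s])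
    also have "\<dots> = mut t" unfolding mu_basic(3)[OF t0] mut_def by (rule ret_prod[OF nu(2,1), symmetric])
    finally show "distr \<pi> borel snd = mut t" .
  qed
  have "W1 (\<mu> t) (mut t) \<le> (\<integral>\<^sup>+ p. ennreal (dist (fst p) (snd p)) \<partial>\<pi>)"
    unfolding W1_def by (rule INF_lower[OF c])
  also have "\<dots> = (\<integral>\<^sup>+ p. ennreal (dist p (xc t, snd p)) \<partial>\<mu> t)"
    unfolding \<pi>_def by (subst nn_integral_distr[OF mg]) (auto simp: g_def intro!: measurable_compose[OF _ measurable_ennreal] borel_measurable_continuous_onI continuous_intros)
  also have "\<dots> \<le> (\<integral>\<^sup>+ p. ennreal D \<partial>\<mu> t)"
  proof (rule nn_integral_mono_AE)
    show "AE p in \<mu> t. ennreal (dist p (xc t, snd p)) \<le> ennreal D"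
      using mu_AE[OF t0]
    proof eventually_elim
      case (elim p)
      have "dist p (xc t, snd p) = \<bar>fst p - xc t\<bar>"
        by (cases p) (simp add: dist_Pair_Pair dist_real_def)
      then show ?case using supp_xc[OF t conjunct1[OF elim]] by (auto intro: ennreal_leI)
    qed
  qed
  also have "\<dots> = ennreal D" using mu_basic(1)[OF t0] by (simp add: prob_space.emeasure_space_1)
  finally show ?thesis .
qed

end


lemma S_deriv_eq [derivative_intros]:
  "(g has_real_derivative g') (at x within s) \<Longrightarrow> D = S' (g x) * g' \<Longrightarrow>
   ((\<lambda>x. S (g x)) has_real_derivative D) (at x within s)"
  using S_deriv_gen by blast

lemma S_cont_intro [continuous_intros]: "continuous_on A g \<Longrightarrow> continuous_on A (\<lambda>x. S (g x))"
  by (rule continuous_on_compose2[OF S_cont]) auto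
lemma S'_cont_intro [continuous_intros]: "continuous_on A g \<Longrightarrow> continuous_on A (\<lambda>x. S' (g x))"
  by (rule continuous_on_compose2[OF S'_cont]) auto

definition uf :: "real \<Rightarrow> real \<Rightarrow> (real \<Rightarrow> real) \<Rightarrow> real \<Rightarrow> real \<Rightarrow> real" where
  "uf K \<delta> Y t y = exp (-2*K*t) * (y - Y t)\<^sup>2 / \<delta>\<^sup>2"
definition uft :: "real \<Rightarrow> real \<Rightarrow> (real \<Rightarrow> real) \<Rightarrow> (real \<Rightarrow> real) \<Rightarrow> real \<Rightarrow> real \<Rightarrow> real" where
  "uft K \<delta> Y Yd t y = (-2*K*exp (-2*K*t) * (y - Y t)\<^sup>2 - 2*exp (-2*K*t) * (y - Y t) * Yd t) / \<delta>\<^sup>2"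
definition ufx :: "real \<Rightarrow> real \<Rightarrow> (real \<Rightarrow> real) \<Rightarrow> real \<Rightarrow> real \<Rightarrow> real" where
  "ufx K \<delta> Y t y = 2*exp (-2*K*t) * (y - Y t) / \<delta>\<^sup>2"

definition tphi where
  "tphi K \<delta> T w0 Y = (\<lambda>t y v. S (T+1-t) * S (2 - 2 * uf K \<delta> Y t y) * S (2 - 2*((v-w0)/\<delta>)\<^sup>2))"
definition tphit where
  "tphit K \<delta> T w0 Y Yd = (\<lambda>t y v. - S' (T+1-t) * S (2 - 2 * uf K \<delta> Y t y) * S (2 - 2*((v-w0)/\<delta>)\<^sup>2)
      + S (T+1-t) * (S' (2 - 2 * uf K \<delta> Y t y) * (-2 * uft K \<delta> Y Yd t y)) * S (2 - 2*((v-w0)/\<delta>)\<^sup>2))"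
definition tphix where
  "tphix K \<delta> T w0 Y = (\<lambda>t y v. S (T+1-t) * (S' (2 - 2 * uf K \<delta> Y t y) * (-2 * ufx K \<delta> Y t y)) * S (2 - 2*((v-w0)/\<delta>)\<^sup>2))"
definition tphiw where
  "tphiw K \<delta> T w0 Y = (\<lambda>t y v. S (T+1-t) * S (2 - 2 * uf K \<delta> Y t y) * (S' (2 - 2*((v-w0)/\<delta>)\<^sup>2) * (-2 * (2 * ((v-w0)/\<delta>) * (1/\<delta>)))))"

lemma uf_dt:
  assumes "(Y has_real_derivative Yd t) (at t within {0..})"
  shows "((\<lambda>t. uf K \<delta> Y t y) has_real_derivative uft K \<delta> Y Yd t y) (at t within {0..})"
proof -
  have "((\<lambda>t. exp (-2*K*t) * (y - Y t)\<^sup>2) has_real_derivative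
      (-2*K*exp (-2*K*t) * (y - Y t)\<^sup>2 - 2*exp (-2*K*t) * (y - Y t) * Yd t)) (at t within {0..})"
    by (rule derivative_eq_intros refl assms | simp)+
  then show ?thesis unfolding uf_def[abs_def] uft_def by (rule DERIV_cdivide)
qed

lemma uf_dx:
  shows "((\<lambda>y. uf K \<delta> Y t y) has_real_derivative ufx K \<delta> Y t y) (at y)"
proof -
  have "((\<lambda>y. exp (-2*K*t) * (y - Y t)\<^sup>2) has_real_derivative 2*exp (-2*K*t) * (y - Y t)) (at y)"
    by (rule derivative_eq_intros refl | simp)+
  then show ?thesis unfolding uf_def[abs_def] ufx_def by (rule DERIV_cdivide)
qed

lemma tphi_test:
  assumes d: "\<And>t. t \<ge> 0 \<Longrightarrow> (Y has_real_derivative Yd t) (at t within {0..})"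
    and cY: "continuous_on {0..} Y" and cYd: "continuous_on {0..} Yd"
    and bY: "\<And>t. t \<le> T + 1 \<Longrightarrow> \<bar>Y t\<bar> \<le> BY"
    and \<delta>: "\<delta> > 0" and K: "K \<ge> 0" and T: "T \<ge> 0"
  shows "test_fun (tphi K \<delta> T w0 Y) (tphit K \<delta> T w0 Y Yd) (tphix K \<delta> T w0 Y)"
  unfolding test_fun_def
proof (intro exI[of _ "tphiw K \<delta> T w0 Y"] conjI allI impI)
  fix t y v :: real assume t: "t \<ge> 0"
  have \<delta>0: "\<delta> \<noteq> 0" using \<delta> by simp
  show "((\<lambda>s. tphi K \<delta> T w0 Y s y v) has_real_derivative tphit K \<delta> T w0 Y Yd t y v) (at t within {0..})"
    unfolding tphi_def tphit_def
    by (rule derivative_eq_intros refl uf_dt d t \<delta>0 | simp)+ (simp add: algebra_simps)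
  show "((\<lambda>y. tphi K \<delta> T w0 Y t y v) has_real_derivative tphix K \<delta> T w0 Y t y v) (at y)"
    unfolding tphi_def tphix_def
    by (rule derivative_eq_intros refl uf_dx \<delta>0 | simp)+
  show "((\<lambda>v. tphi K \<delta> T w0 Y t y v) has_real_derivative tphiw K \<delta> T w0 Y t y v) (at v)"
    unfolding tphi_def tphiw_def
    by (rule derivative_eq_intros refl | simp add: \<delta>0)+ (simp add: power2_eq_square field_simps \<delta>0)
next
  have c1: "continuous_on ({0..} \<times> UNIV) (\<lambda>p::real\<times>real\<times>real. Y (fst p))"
    by (rule continuous_on_compose2[OF cY]) (auto intro: continuous_intros)
  have c2: "continuous_on ({0..} \<times> UNIV) (\<lambda>p::real\<times>real\<times>real. Yd (fst p))"
    by (rule continuous_on_compose2[OF cYd]) (auto intro: continuous_intros)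
  show "continuous_on ({0..} \<times> UNIV) (\<lambda>(t, x, w). tphi K \<delta> T w0 Y t x w)"
    unfolding tphi_def uf_def case_prod_beta
    by (intro continuous_intros c1 c2) (use \<delta> in auto)
  show "continuous_on ({0..} \<times> UNIV) (\<lambda>(t, x, w). tphit K \<delta> T w0 Y Yd t x w)"
    unfolding tphit_def uf_def uft_def case_prod_beta
    by (intro continuous_intros c1 c2) (use \<delta> in auto)
  show "continuous_on ({0..} \<times> UNIV) (\<lambda>(t, x, w). tphix K \<delta> T w0 Y t x w)"
    unfolding tphix_def uf_def ufx_def case_prod_beta
    by (intro continuous_intros c1 c2) (use \<delta> in auto)
  show "continuous_on ({0..} \<times> UNIV) (\<lambda>(t, x, w). tphiw K \<delta> T w0 Y t x w)"
    unfolding tphiw_def uf_def case_prod_beta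
    by (intro continuous_intros c1 c2) (use \<delta> in auto)
next
  define R where "R = max (T + 1) (max (BY + \<delta> * exp (K*(T+1))) (\<bar>w0\<bar> + \<delta>))"
  show "\<exists>R. \<forall>t x w. R \<le> t \<or> R \<le> \<bar>x\<bar> \<or> R \<le> \<bar>w\<bar> \<longrightarrow> tphi K \<delta> T w0 Y t x w = 0"
  proof (intro exI[of _ R] allI impI)
    fix t y v assume H: "R \<le> t \<or> R \<le> \<bar>y\<bar> \<or> R \<le> \<bar>v\<bar>"
    consider "t \<ge> T + 1" | "t < T + 1 \<and> R \<le> \<bar>y\<bar>" | "R \<le> \<bar>v\<bar>" using H unfolding R_def by force
    then show "tphi K \<delta> T w0 Y t y v = 0"
    proof cases
      case 1 then show ?thesis unfolding tphi_def by (simp add: S_le0)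
    next
      case 2
      have "\<bar>y - Y t\<bar> \<ge> \<delta> * exp (K*(T+1))"
        using 2 bY[of t] unfolding R_def by auto
      moreover have "exp (K*t) \<le> exp (K*(T+1))" using 2 K by (auto intro: mult_left_mono)
      ultimately have "\<bar>y - Y t\<bar> \<ge> \<delta> * exp (K*t)" using \<delta> by (smt (verit) mult_left_mono)
      then have "(y - Y t)\<^sup>2 \<ge> (\<delta> * exp (K*t))\<^sup>2" using \<delta>
        by (metis abs_ge_zero abs_le_square_iff abs_mult abs_of_pos exp_gt_zero power2_abs zero_less_mult_iff)
      then have "(y - Y t)\<^sup>2 \<ge> \<delta>\<^sup>2 * exp (2*K*t)"
        by (simp add: power_mult_distrib exp_double[symmetric] power2_eq_square exp_add[symmetric] algebra_simps)
      then have "exp (-2*K*t) * (y - Y t)\<^sup>2 \<ge> exp (-2*K*t) * (\<delta>\<^sup>2 * exp (2*K*t))"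
        by (intro mult_left_mono) auto
      also have "exp (-2*K*t) * (\<delta>\<^sup>2 * exp (2*K*t)) = \<delta>\<^sup>2"
        by (simp add: exp_add[symmetric] algebra_simps)
      finally have "uf K \<delta> Y t y \<ge> 1" unfolding uf_def using \<delta> by simp
      then show ?thesis unfolding tphi_def by (simp add: S_le0)
    next
      case 3
      then have "\<bar>v - w0\<bar> \<ge> \<delta>" unfolding R_def by auto
      then have "((v - w0)/\<delta>)\<^sup>2 \<ge> 1" using \<delta>
        by (simp add: power_divide abs_le_square_iff[symmetric] le_divide_eq)
      then show ?thesis unfolding tphi_def by (simp add: S_le0)
    qed
  qed
qed


lemma cont_bounded_interval:
  fixes f :: "real \<Rightarrow> real"
  assumes "continuous_on {a..b} f"
  shows "\<exists>B. \<forall>t\<in>{a..b}. \<bar>f t\<bar> \<le> B"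
proof -
  have "compact (f ` {a..b})" by (rule compact_continuous_image[OF assms]) simp
  then have "bounded (f ` {a..b})" by (rule compact_imp_bounded)
  then show ?thesis unfolding bounded_iff by auto
qed

context setting begin

lemma X_cont: "continuous_on {0..} (\<lambda>t. X t x w)"
  unfolding continuous_on_eq_continuous_within
  using flow DERIV_continuous by blast

lemma Yd_cont:
  assumes w: "w \<in> \<Omega>"
  shows "continuous_on {0..} (\<lambda>t. F (\<mu> t) (X t x w) w)"
  unfolding continuous_on_def
proof (intro ballI)
  fix t :: real assume "t \<in> {0..}"
  then have t: "t \<ge> 0" by simp
  have KI: "\<kappa> * I > 0" "\<kappa> * M > 0" using pos by auto
  show "((\<lambda>t. F (\<mu> t) (X t x w) w) \<longlongrightarrow> F (\<mu> t) (X t x w) w) (at t within {0..})"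
  proof (rule tendstoI)
    fix e :: real assume e: "e > 0"
    have cX: "((\<lambda>s. X s x w) \<longlongrightarrow> X t x w) (at t within {0..})"
      using X_cont t unfolding continuous_on_def by auto
    have ev1: "eventually (\<lambda>s. dist (X s x w) (X t x w) < e / (2 * (\<kappa> * I))) (at t within {0..})"
      by (rule tendstoD[OF cX]) (use e KI in simp)
    have ev2: "eventually (\<lambda>s. s \<ge> 0 \<and> W1 (\<mu> s) (\<mu> t) \<le> ennreal (e / (4 * (\<kappa> * M)))) (at t within {0..})"
      by (rule W1_cont[OF t]) (use e KI in simp)
    show "eventually (\<lambda>s. dist (F (\<mu> s) (X s x w) w) (F (\<mu> t) (X t x w) w) < e) (at t within {0..})"
      using ev1 ev2
    proof eventually_elim
      case (elim s)
      have a: "\<bar>F (\<mu> s) (X s x w) w - F (\<mu> t) (X s x w) w\<bar> \<le> \<kappa> * M * (e / (4 * (\<kappa> * M)))"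
        by (rule A1_real[OF mu_P2 mu_P2[OF t]]) (use elim e KI w in auto)
      have b: "\<bar>F (\<mu> t) (X s x w) w - F (\<mu> t) (X t x w) w\<bar> \<le> \<kappa> * I * \<bar>X s x w - X t x w\<bar>"
        by (rule F_lip_x[OF mu_P2[OF t]])
      have "\<kappa> * I * \<bar>X s x w - X t x w\<bar> \<le> \<kappa> * I * (e / (2 * (\<kappa> * I)))"
        using elim by (intro mult_left_mono) (auto simp: dist_real_def KI less_imp_le)
      also have "\<dots> = e/2" using pos by (simp add: field_simps)
      finally have b': "\<kappa> * I * \<bar>X s x w - X t x w\<bar> \<le> e/2" .
      have "\<kappa> * M * (e / (4 * (\<kappa> * M))) = e/4" using pos by (simp add: field_simps)
      then show ?case using a b b' e unfolding dist_real_def by linarith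
    qed
  qed
qed

lemma weak:
  assumes "test_fun \<phi> \<phi>t \<phi>x" "t \<ge> 0"
  shows "integral\<^sup>L (\<mu> t) (\<lambda>(x,w). \<phi> t x w)
        = integral\<^sup>L (\<mu> 0) (\<lambda>(x,w). \<phi> 0 x w)
          + integral {0..t} (\<lambda>s. integral\<^sup>L (\<mu> s)
               (\<lambda>(x,w). \<phi>t s x w + F (\<mu> s) x w * \<phi>x s x w))"
  using sol assms unfolding mv_solution_def by blast

lemma track:
  assumes xw: "(x, w) \<in> msupp (\<mu> 0)" and T: "T \<ge> 0" and e: "e > 0"
  shows "\<exists>q \<in> msupp (\<mu> T). \<bar>fst q - X T x w\<bar> < e"
proof -
  have w: "w \<in> \<Omega>" using supp_snd[of 0 "(x,w)"] xw by simp
  define K where "K = \<kappa> * I + 2 * I"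
  have K0: "K \<ge> 0" unfolding K_def using pos by simp
  define \<delta> where "\<delta> = e * exp (- K * T)"
  have \<delta>: "\<delta> > 0" unfolding \<delta>_def using e by simp
  define Y where "Y = (\<lambda>t. X (max 0 t) x w)"
  define Yd where "Yd = (\<lambda>t. F (\<mu> (max 0 t)) (Y t) w)"
  have Yeq: "Y t = X t x w" if "t \<ge> 0" for t unfolding Y_def using that by simp
  have Ydeq: "Yd t = F (\<mu> t) (X t x w) w" if "t \<ge> 0" for t unfolding Yd_def using that Yeq by simp
  have dY: "(Y has_real_derivative Yd t) (at t within {0..})" if t: "t \<ge> 0" for t
    unfolding Ydeq[OF t]
    by (rule has_field_derivative_transform_within[OF flow[OF t], where d=1])
       (use t Yeq in auto)
  have cY: "continuous_on {0..} Y"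
    by (rule continuous_on_cong[THEN iffD1, OF refl _ X_cont]) (use Yeq in auto)
  have cYd: "continuous_on {0..} Yd"
    by (rule continuous_on_cong[THEN iffD1, OF refl _ Yd_cont[OF w]]) (use Ydeq in auto)
  obtain BY where BY: "\<forall>t\<in>{0..T+1}. \<bar>Y t\<bar> \<le> BY"
    using cont_bounded_interval[OF continuous_on_subset[OF cY]] by (metis atLeastAtMost_iff atLeast_iff subsetI)
  have bY: "\<bar>Y t\<bar> \<le> BY" if "t \<le> T + 1" for t
  proof (cases "t \<ge> 0")
    case True then show ?thesis using BY that by auto
  next
    case False
    then have "Y t = Y 0" unfolding Y_def by simp
    then show ?thesis using BY T by auto
  qed
  define \<phi> where "\<phi> = tphi K \<delta> T w Y"
  define \<phi>t where "\<phi>t = tphit K \<delta> T w Y Yd"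
  define \<phi>x where "\<phi>x = tphix K \<delta> T w Y"
  have test: "test_fun \<phi> \<phi>t \<phi>x"
    unfolding \<phi>_def \<phi>t_def \<phi>x_def by (rule tphi_test[OF dY cY cYd bY \<delta> K0 T])
  have W: "integral\<^sup>L (\<mu> T) (\<lambda>(x,w). \<phi> T x w)
        = integral\<^sup>L (\<mu> 0) (\<lambda>(x,w). \<phi> 0 x w)
          + integral {0..T} (\<lambda>s. integral\<^sup>L (\<mu> s) (\<lambda>(x,w). \<phi>t s x w + F (\<mu> s) x w * \<phi>x s x w))"
    by (rule weak[OF test T])
  have key: "0 \<le> \<phi>t s y v + F (\<mu> s) y v * \<phi>x s y v" if s: "s \<in> {0..T}" for s y v
  proof -
    have s0: "s \<ge> 0" using s by simp
    have S1: "S (T+1-s) = 1" "S' (T+1-s) = 0" using s by (auto intro: S_ge1 S'_ge1)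
    define u where "u = uf K \<delta> Y s y"
    define Hv where "Hv = S (2 - 2*((v-w)/\<delta>)\<^sup>2)"
    define a where "a = y - Y s"
    define brk where "brk = a * (F (\<mu> s) y v - Yd s) - K * a\<^sup>2"
    have eq: "\<phi>t s y v + F (\<mu> s) y v * \<phi>x s y v
        = (-4 * exp (-2*K * s) / \<delta>\<^sup>2) * (S' (2 - 2*u) * Hv * brk)"
      unfolding \<phi>t_def \<phi>x_def tphit_def tphix_def S1 u_def[symmetric] Hv_def[symmetric]
        uft_def ufx_def brk_def a_def
      using \<delta> by (simp add: field_simps power2_eq_square)
    have Hv0: "Hv \<ge> 0" unfolding Hv_def by (rule S_nonneg)
    have S'0: "S' (2 - 2*u) \<ge> 0" by (rule S'_nonneg)
    have "S' (2 - 2*u) * Hv * brk \<le> 0"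
    proof (cases "S' (2 - 2*u) * Hv = 0")
      case True then show ?thesis by (metis mult_zero_left order_refl)
    next
      case False
      then have nz1: "S' (2 - 2*u) \<noteq> 0" and nz2: "Hv \<noteq> 0" by auto
      have "2 - 2*u > 0" using nz1 S'_le0[of "2 - 2*u"] by linarith
      moreover have "2 - 2*u < 1" using nz1 S'_ge1[of "2 - 2*u"] by linarith
      ultimately have u12: "u > 1/2" by simp
      have "2 - 2*((v-w)/\<delta>)\<^sup>2 > 0" using nz2 S_le0[of "2 - 2*((v-w)/\<delta>)\<^sup>2"] unfolding Hv_def by linarith
      then have "((v-w)/\<delta>)\<^sup>2 < 1" by simp
      then have "(v-w)\<^sup>2 < \<delta>\<^sup>2" using \<delta> by (simp add: power_divide divide_less_eq)
      then have vw: "\<bar>v - w\<bar> < \<delta>" using power2_less_imp_less[of "\<bar>v-w\<bar>" \<delta>] \<delta> by simp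
      have "exp (-2*K * s) * a\<^sup>2 / \<delta>\<^sup>2 > 1/2" using u12 unfolding u_def uf_def a_def by simp
      then have "exp (-2*K * s) * a\<^sup>2 > \<delta>\<^sup>2 / 2" using \<delta> by (simp add: field_simps)
      moreover have "exp (-2*K * s) * a\<^sup>2 \<le> 1 * a\<^sup>2"
        by (intro mult_right_mono) (use K0 s0 in auto)
      ultimately have "a\<^sup>2 > \<delta>\<^sup>2 / 2" by simp
      then have "(\<delta>/2)\<^sup>2 < \<bar>a\<bar>\<^sup>2" using \<delta> by (simp add: power_divide) (smt (verit) zero_le_power2)
      then have a2: "\<delta>/2 < \<bar>a\<bar>" using power2_less_imp_less[of "\<delta>/2" "\<bar>a\<bar>"] by simp
      have Ydy: "Yd s = F (\<mu> s) (Y s) w" using Ydeq[OF s0] Yeq[OF s0] by simp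
      have lip: "\<bar>F (\<mu> s) y v - Yd s\<bar> \<le> \<kappa> * I * \<bar>a\<bar> + I * \<bar>v - w\<bar>"
        unfolding Ydy a_def by (rule F_lip2[OF mu_P2[OF s0]])
      have "a * (F (\<mu> s) y v - Yd s) \<le> \<bar>a\<bar> * \<bar>F (\<mu> s) y v - Yd s\<bar>"
        by (simp add: abs_mult[symmetric])
      also have "\<dots> \<le> \<bar>a\<bar> * (\<kappa> * I * \<bar>a\<bar> + I * \<bar>v - w\<bar>)"
        by (rule mult_left_mono[OF lip]) simp
      also have "\<dots> = \<kappa> * I * a\<^sup>2 + I * (\<bar>a\<bar> * \<bar>v - w\<bar>)"
        by (simp add: algebra_simps power2_eq_square abs_mult_self_eq)
      finally have b1: "a * (F (\<mu> s) y v - Yd s) \<le> \<kappa> * I * a\<^sup>2 + I * (\<bar>a\<bar> * \<bar>v - w\<bar>)" .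
      have "\<bar>a\<bar> * \<bar>v - w\<bar> < \<bar>a\<bar> * (2 * \<bar>a\<bar>)"
        using vw a2 \<delta> by (intro mult_strict_left_mono) auto
      then have "I * (\<bar>a\<bar> * \<bar>v - w\<bar>) < I * (2 * a\<^sup>2)"
        using pos by (simp add: power2_eq_square abs_mult_self_eq)
      then have "brk < 0" using b1 unfolding brk_def K_def by (simp add: algebra_simps)
      then show ?thesis using S'0 Hv0 by (simp add: mult_nonneg_nonneg mult_nonneg_nonpos)
    qed
    moreover have "-4 * exp (-2*K * s) / \<delta>\<^sup>2 \<le> 0" by simp
    ultimately show ?thesis unfolding eq by (intro mult_nonpos_nonpos) auto
  qed
  have I0: "0 \<le> integral {0..T} (\<lambda>s. integral\<^sup>L (\<mu> s) (\<lambda>(x,w). \<phi>t s x w + F (\<mu> s) x w * \<phi>x s x w))"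
  proof (cases "(\<lambda>s. integral\<^sup>L (\<mu> s) (\<lambda>(x,w). \<phi>t s x w + F (\<mu> s) x w * \<phi>x s x w)) integrable_on {0..T}")
    case True
    show ?thesis
      by (rule integral_nonneg[OF True]) (auto intro!: integral_nonneg_AE AE_I2 key)
  qed (simp add: not_integrable_integral)
  have phi_bd: "0 \<le> \<phi> t y v \<and> \<phi> t y v \<le> 1" for t y v
    unfolding \<phi>_def tphi_def
    by (intro conjI mult_nonneg_nonneg mult_le_one S_nonneg S_le1)
  have c0: "continuous_on UNIV (\<lambda>p::real\<times>real. \<phi> 0 (fst p) (snd p))"
    unfolding \<phi>_def tphi_def uf_def by (intro continuous_intros) (use \<delta> in auto)
  have v0: "\<phi> 0 x w = 1"
    unfolding \<phi>_def tphi_def uf_def using T Yeq[of 0] flow0 by (simp add: S_ge1)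
  obtain r where r: "r > 0" "\<And>p. dist p (x,w) < r \<Longrightarrow> dist (\<phi> 0 (fst p) (snd p)) 1 < 1/2"
    using c0 unfolding continuous_on_iff by (metis UNIV_I fst_conv snd_conv v0 zero_less_divide_iff zero_less_numeral zero_less_one)
  have s0: "sets (\<mu> 0) = sets borel" and P0: "prob_space (\<mu> 0)" using mu_basic[of 0] by auto
  interpret P0: prob_space "\<mu> 0" by (rule P0)
  have ib: "ball (x,w) r \<in> sets (\<mu> 0)" using s0 by simp
  have int0: "integrable (\<mu> 0) (\<lambda>(x,w). \<phi> 0 x w)"
    by (rule integrable_cont_bound[OF P0 s0, where B=1]) (use c0 phi_bd in \<open>auto simp: case_prod_beta\<close>)
  have mpos: "measure (\<mu> 0) (ball (x,w) r) > 0"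
  proof -
    have "emeasure (\<mu> 0) (ball (x,w) r) \<noteq> 0" using xw r(1) unfolding msupp_def by auto
    then have "measure (\<mu> 0) (ball (x,w) r) \<noteq> 0" using P0.emeasure_eq_measure by auto
    then show ?thesis using measure_nonneg[of "\<mu> 0"] by (simp add: order_less_le)
  qed
  have "0 < (1/2) * measure (\<mu> 0) (ball (x,w) r)" using mpos by simp
  also have "\<dots> = integral\<^sup>L (\<mu> 0) (\<lambda>p. (1/2) * indicator (ball (x,w) r) p)"
    using ib by (simp add: sets_eq_imp_space_eq[OF s0])
  also have "\<dots> \<le> integral\<^sup>L (\<mu> 0) (\<lambda>(x,w). \<phi> 0 x w)"
  proof (rule integral_mono[OF _ int0])
    show "integrable (\<mu> 0) (\<lambda>p. (1/2) * indicator (ball (x,w) r) p :: real)"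
      using ib by (intro integrable_mult_right integrable_real_indicator) (auto simp: less_top[symmetric] P0.emeasure_finite)
    fix p :: "real \<times> real"
    show "(1/2) * indicator (ball (x,w) r) p \<le> (case p of (x, w) \<Rightarrow> \<phi> 0 x w)"
    proof (cases "p \<in> ball (x,w) r")
      case True
      then have "dist (\<phi> 0 (fst p) (snd p)) 1 < 1/2" using r(2) by (simp add: dist_commute)
      then have "\<phi> 0 (fst p) (snd p) > 1/2" unfolding dist_real_def by linarith
      then show ?thesis using True by (auto simp: case_prod_beta)
    next
      case False then show ?thesis using phi_bd by (auto simp: case_prod_beta)
    qed
  qed
  finally have pos0: "0 < integral\<^sup>L (\<mu> 0) (\<lambda>(x,w). \<phi> 0 x w)" .
  have posT: "0 < integral\<^sup>L (\<mu> T) (\<lambda>(x,w). \<phi> T x w)" using W I0 pos0 by linarith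
  obtain q where q: "q \<in> msupp (\<mu> T)" "\<phi> T (fst q) (snd q) \<noteq> 0"
  proof (rule ccontr)
    assume "\<not> thesis"
    then have z: "\<And>q. q \<in> msupp (\<mu> T) \<Longrightarrow> \<phi> T (fst q) (snd q) = 0" using that by blast
    have "\<bar>integral\<^sup>L (\<mu> T) (\<lambda>(x,w). \<phi> T x w)\<bar> \<le> 0"
      by (rule abs_integral_le_AE[OF mu_basic(1)[OF T]]) (use mu_AE[OF T] z in \<open>auto simp: case_prod_beta elim!: AE_mp\<close>)
    then show False using posT by simp
  qed
  have "S (2 - 2 * uf K \<delta> Y T (fst q)) \<noteq> 0" using q(2) unfolding \<phi>_def tphi_def by auto
  then have "2 - 2 * uf K \<delta> Y T (fst q) > 0" using S_le0[of "2 - 2 * uf K \<delta> Y T (fst q)"] by linarith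
  then have "exp (-2*K*T) * (fst q - Y T)\<^sup>2 / \<delta>\<^sup>2 < 1" unfolding uf_def by simp
  then have "exp (-2*K*T) * (fst q - Y T)\<^sup>2 < \<delta>\<^sup>2" using \<delta> by (simp add: divide_less_eq)
  also have "\<delta>\<^sup>2 = exp (-2*K*T) * e\<^sup>2"
    unfolding \<delta>_def by (simp add: power_mult_distrib exp_double[symmetric] power2_eq_square exp_add[symmetric])
  finally have "(fst q - Y T)\<^sup>2 < e\<^sup>2" by simp
  then have "\<bar>fst q - Y T\<bar> < e" using power2_less_imp_less[of "\<bar>fst q - Y T\<bar>" e] e by simp
  then show ?thesis using q(1) Yeq[OF T] by auto
qed

lemma X_near:
  assumes xw: "(x, w) \<in> msupp (\<mu> 0)" and t: "t \<in> {0..ts}"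
  shows "\<bar>X t x w - xc t\<bar> \<le> D"
proof (rule field_le_epsilon)
  fix e :: real assume e: "e > 0"
  have t0: "t \<ge> 0" using t by simp
  obtain q where q: "q \<in> msupp (\<mu> t)" "\<bar>fst q - X t x w\<bar> < e" using track[OF xw t0 e] by blast
  show "\<bar>X t x w - xc t\<bar> \<le> D + e" using supp_xc[OF t q(1)] q(2) by linarith
qed

lemma X_diff:
  assumes xw: "(x, w) \<in> msupp (\<mu> 0)" and xw': "(x', w') \<in> msupp (\<mu> 0)" and t: "t \<in> {0..ts}"
  shows "\<bar>X t x w - X t x' w'\<bar> \<le> D"
proof (rule field_le_epsilon)
  fix e :: real assume e: "e > 0"
  have t0: "t \<ge> 0" using t by simp
  have e2: "e/2 > 0" using e by simp
  obtain q where q: "q \<in> msupp (\<mu> t)" "\<bar>fst q - X t x w\<bar> < e/2" using track[OF xw t0 e2] by blast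
  obtain q' where q': "q' \<in> msupp (\<mu> t)" "\<bar>fst q' - X t x' w'\<bar> < e/2" using track[OF xw' t0 e2] by blast
  show "\<bar>X t x w - X t x' w'\<bar> \<le> D + e" using diam[OF t q(1) q'(1)] q(2) q'(2) by linarith
qed

end


definition xphi where "xphi c T0 = (\<lambda>t y v. S (T0+1-t) * (y * S (c - y\<^sup>2)) * S (c - v\<^sup>2))"
definition xphit where "xphit c T0 = (\<lambda>t y v. - S' (T0+1-t) * (y * S (c - y\<^sup>2)) * S (c - v\<^sup>2))"
definition xphix where "xphix c T0 = (\<lambda>t y v. S (T0+1-t) * (S (c - y\<^sup>2) + y * (S' (c - y\<^sup>2) * (- (2 * y)))) * S (c - v\<^sup>2))"
definition xphiw where "xphiw c T0 = (\<lambda>t y v. S (T0+1-t) * (y * S (c - y\<^sup>2)) * (S' (c - v\<^sup>2) * (- (2 * v))))"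

lemma xphi_test:
  assumes c: "c \<ge> 1" and T0: "T0 \<ge> 0"
  shows "test_fun (xphi c T0) (xphit c T0) (xphix c T0)"
  unfolding test_fun_def
proof (intro exI[of _ "xphiw c T0"] conjI allI impI)
  fix t y v :: real assume t: "t \<ge> 0"
  show "((\<lambda>s. xphi c T0 s y v) has_real_derivative xphit c T0 t y v) (at t within {0..})"
    unfolding xphi_def xphit_def
    by (rule derivative_eq_intros refl | simp)+
  show "((\<lambda>y. xphi c T0 t y v) has_real_derivative xphix c T0 t y v) (at y)"
    unfolding xphi_def xphix_def
    by (rule derivative_eq_intros refl | simp)+
  show "((\<lambda>v. xphi c T0 t y v) has_real_derivative xphiw c T0 t y v) (at v)"
    unfolding xphi_def xphiw_def
    by (rule derivative_eq_intros refl | simp)+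
next
  show "continuous_on ({0..} \<times> UNIV) (\<lambda>(t, x, w). xphi c T0 t x w)"
    unfolding xphi_def case_prod_beta by (intro continuous_intros)
  show "continuous_on ({0..} \<times> UNIV) (\<lambda>(t, x, w). xphit c T0 t x w)"
    unfolding xphit_def case_prod_beta by (intro continuous_intros)
  show "continuous_on ({0..} \<times> UNIV) (\<lambda>(t, x, w). xphix c T0 t x w)"
    unfolding xphix_def case_prod_beta by (intro continuous_intros)
  show "continuous_on ({0..} \<times> UNIV) (\<lambda>(t, x, w). xphiw c T0 t x w)"
    unfolding xphiw_def case_prod_beta by (intro continuous_intros)
next
  show "\<exists>R. \<forall>t x w. R \<le> t \<or> R \<le> \<bar>x\<bar> \<or> R \<le> \<bar>w\<bar> \<longrightarrow> xphi c T0 t x w = 0"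
  proof (intro exI[of _ "max (T0+1) c"] allI impI)
    fix t y v assume H: "max (T0+1) c \<le> t \<or> max (T0+1) c \<le> \<bar>y\<bar> \<or> max (T0+1) c \<le> \<bar>v\<bar>"
    have sq: "c \<le> z\<^sup>2" if "c \<le> \<bar>z\<bar>" for z :: real
    proof -
      have "c * 1 \<le> \<bar>z\<bar> * \<bar>z\<bar>" using that c by (intro mult_mono) auto
      then show ?thesis by (simp add: power2_eq_square)
    qed
    consider "T0 + 1 \<le> t" | "c \<le> \<bar>y\<bar>" | "c \<le> \<bar>v\<bar>" using H by auto
    then show "xphi c T0 t y v = 0"
      unfolding xphi_def by cases (auto simp: S_le0 dest!: sq)
  qed
qed

context setting begin

definition V where "V t = integral\<^sup>L (\<mu> t) (\<lambda>(y,v). F (\<mu> t) y v)"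

lemma box: "\<exists>R0 \<ge> 1. \<forall>t\<in>{0..ts}. \<forall>p\<in>msupp (\<mu> t). \<bar>fst p\<bar> \<le> R0 \<and> \<bar>snd p\<bar> \<le> R0"
proof -
  obtain p0 where p0: "p0 \<in> msupp (\<mu> 0)" using msupp_nonempty[OF mu_basic(2,1)[of 0]] by auto
  obtain x0 w0 where p0': "(x0, w0) \<in> msupp (\<mu> 0)" using p0 by (cases p0) auto
  obtain BX where BX: "\<forall>t\<in>{0..ts}. \<bar>X t x0 w0\<bar> \<le> BX"
    using cont_bounded_interval[OF continuous_on_subset[OF X_cont[of x0 w0]]] by (metis atLeastAtMost_iff atLeast_iff subsetI)
  obtain BO where BO: "\<forall>w\<in>\<Omega>. norm w \<le> BO" using nu(4) unfolding bounded_iff by auto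
  define R0 where "R0 = max 1 (max (2*D + BX) BO)"
  show ?thesis
  proof (intro exI[of _ R0] conjI ballI)
    show "1 \<le> R0" unfolding R0_def by simp
    fix t p assume t: "t \<in> {0..ts}" and p: "p \<in> msupp (\<mu> t)"
    have "\<bar>fst p - xc t\<bar> \<le> D" by (rule supp_xc[OF t p])
    moreover have "\<bar>X t x0 w0 - xc t\<bar> \<le> D" by (rule X_near[OF p0' t])
    moreover have "\<bar>X t x0 w0\<bar> \<le> BX" using BX t by auto
    ultimately show "\<bar>fst p\<bar> \<le> R0" unfolding R0_def by linarith
    have "snd p \<in> \<Omega>" using supp_snd[OF _ p] t by auto
    then show "\<bar>snd p\<bar> \<le> R0" using BO unfolding R0_def by force
  qed
qed

definition R0 where "R0 = (SOME R. R \<ge> 1 \<and> (\<forall>t\<in>{0..ts}. \<forall>p\<in>msupp (\<mu> t). \<bar>fst p\<bar> \<le> R \<and> \<bar>snd p\<bar> \<le> R))"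

lemma R0: "R0 \<ge> 1" "\<And>t p. t\<in>{0..ts} \<Longrightarrow> p\<in>msupp (\<mu> t) \<Longrightarrow> \<bar>fst p\<bar> \<le> R0 \<and> \<bar>snd p\<bar> \<le> R0"
proof -
  have "R0 \<ge> 1 \<and> (\<forall>t\<in>{0..ts}. \<forall>p\<in>msupp (\<mu> t). \<bar>fst p\<bar> \<le> R0 \<and> \<bar>snd p\<bar> \<le> R0)"
    unfolding R0_def by (rule someI_ex) (use box in blast)
  then show "R0 \<ge> 1" "\<And>t p. t\<in>{0..ts} \<Longrightarrow> p\<in>msupp (\<mu> t) \<Longrightarrow> \<bar>fst p\<bar> \<le> R0 \<and> \<bar>snd p\<bar> \<le> R0" by auto
qed

lemma box_AE:
  assumes t: "t \<in> {0..ts}"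
  shows "AE p in \<mu> t. \<bar>fst p\<bar> \<le> R0 \<and> \<bar>snd p\<bar> \<le> R0 \<and> snd p \<in> \<Omega> \<and> p \<in> msupp (\<mu> t)"
  using mu_AE[of t] t R0(2)[OF t] by (auto elim!: AE_mp)

lemma meas_cont2:
  assumes "sets N = sets borel" "continuous_on UNIV (\<lambda>p::real\<times>real. f (fst p) (snd p) :: real)"
  shows "(\<lambda>(y,v). f y v) \<in> borel_measurable N"
  using meas_borel_cont[OF assms] by (simp add: case_prod_beta)

lemma F_cont2: "P2nu \<nu> m \<Longrightarrow> continuous_on UNIV (\<lambda>p::real\<times>real. F m (fst p) (snd p))"
  by (rule F_cont_comp) (auto intro: continuous_intros)

lemma F_int:
  assumes m: "P2nu \<nu> m" and t: "t \<in> {0..ts}"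
  shows "integrable (\<mu> t) (\<lambda>(y,v). F m y v)"
proof -
  have t0: "t \<ge> 0" using t by simp
  show ?thesis
  proof (rule integrable_cont_bound[OF mu_basic(1,2)[OF t0], where B="\<bar>F m 0 0\<bar> + (\<kappa> * I + I) * R0"])
    show "continuous_on UNIV (\<lambda>(y,v). F m y v)" using F_cont2[OF m] by (simp add: case_prod_beta)
    show "AE p in \<mu> t. \<bar>(case p of (y, v) \<Rightarrow> F m y v)\<bar> \<le> \<bar>F m 0 0\<bar> + (\<kappa> * I + I) * R0"
      using box_AE[OF t]
    proof eventually_elim
      case (elim p)
      have "\<bar>F m (fst p) (snd p) - F m 0 0\<bar> \<le> \<kappa> * I * \<bar>fst p - 0\<bar> + I * \<bar>snd p - 0\<bar>" by (rule F_lip2[OF m])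
      moreover have "\<kappa> * I * \<bar>fst p\<bar> \<le> \<kappa> * I * R0" using elim pos by (intro mult_left_mono) auto
      moreover have "I * \<bar>snd p\<bar> \<le> I * R0" using elim pos by (intro mult_left_mono) auto
      ultimately show ?case by (simp add: case_prod_beta algebra_simps)
    qed
  qed
qed

lemma box_sq: "\<bar>z\<bar> \<le> R0 \<Longrightarrow> R0\<^sup>2 + 1 - z\<^sup>2 \<ge> 1"
proof -
  assume "\<bar>z\<bar> \<le> R0"
  then have "\<bar>z\<bar> * \<bar>z\<bar> \<le> R0 * R0" by (intro mult_mono) auto
  then show ?thesis by (simp add: power2_eq_square)
qed

lemma xc_int:
  assumes t: "t \<in> {0..ts}"
  shows "xc t = xc 0 + integral {0..t} V"
proof -
  define c where "c = R0\<^sup>2 + 1"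
  have c1: "c \<ge> 1" unfolding c_def by simp
  have t0: "t \<ge> 0" using t by simp
  have test: "test_fun (xphi c ts) (xphit c ts) (xphix c ts)" by (rule xphi_test[OF c1]) (use ts in simp)
  note W = weak[OF test t0]
  have box_vals: "xphi c ts s y v = y \<and> xphit c ts s y v = 0 \<and> xphix c ts s y v = 1"
    if "s \<in> {0..ts}" "\<bar>y\<bar> \<le> R0" "\<bar>v\<bar> \<le> R0" for s y v
  proof -
    have "S (ts+1-s) = 1" "S' (ts+1-s) = 0" using that by (auto intro: S_ge1 S'_ge1)
    moreover have "S (c - y\<^sup>2) = 1" "S' (c - y\<^sup>2) = 0" "S (c - v\<^sup>2) = 1"
      using box_sq[OF that(2)] box_sq[OF that(3)] unfolding c_def by (auto intro: S_ge1 S'_ge1)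
    ultimately show ?thesis unfolding xphi_def xphit_def xphix_def by simp
  qed
  have cphi: "continuous_on UNIV (\<lambda>p::real\<times>real. xphi c ts s (fst p) (snd p))" for s
    unfolding xphi_def by (intro continuous_intros)
  have L: "integral\<^sup>L (\<mu> s) (\<lambda>(y,v). xphi c ts s y v) = xc s" if s: "s \<in> {0..ts}" for s
  proof -
    have s0: "s \<ge> 0" using s by simp
    have "integral\<^sup>L (\<mu> s) (\<lambda>(y,v). xphi c ts s y v) = integral\<^sup>L (\<mu> s) fst"
    proof (rule integral_cong_AE)
      show "(\<lambda>(y,v). xphi c ts s y v) \<in> borel_measurable (\<mu> s)" by (rule meas_cont2[OF mu_basic(2)[OF s0] cphi])
      show "fst \<in> borel_measurable (\<mu> s)" by (rule meas_borel_cont[OF mu_basic(2)[OF s0]]) (intro continuous_intros)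
      show "AE p in \<mu> s. (case p of (y, v) \<Rightarrow> xphi c ts s y v) = fst p"
        using box_AE[OF s] by eventually_elim (use box_vals[OF s] in \<open>auto simp: case_prod_beta\<close>)
    qed
    then show ?thesis unfolding xc_def by simp
  qed
  have R: "integral\<^sup>L (\<mu> s) (\<lambda>(y,v). xphit c ts s y v + F (\<mu> s) y v * xphix c ts s y v) = V s"
    if s: "s \<in> {0..ts}" for s
  proof -
    have s0: "s \<ge> 0" using s by simp
    show ?thesis unfolding V_def
    proof (rule integral_cong_AE)
      show "(\<lambda>(y,v). xphit c ts s y v + F (\<mu> s) y v * xphix c ts s y v) \<in> borel_measurable (\<mu> s)"
        by (rule meas_cont2[OF mu_basic(2)[OF s0]]) (unfold xphit_def xphix_def, intro continuous_intros F_cont2 mu_P2 s0)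
      show "(\<lambda>(y,v). F (\<mu> s) y v) \<in> borel_measurable (\<mu> s)"
        by (rule meas_cont2[OF mu_basic(2)[OF s0] F_cont2[OF mu_P2[OF s0]]])
      show "AE p in \<mu> s. (case p of (y, v) \<Rightarrow> xphit c ts s y v + F (\<mu> s) y v * xphix c ts s y v) = (case p of (y, v) \<Rightarrow> F (\<mu> s) y v)"
        using box_AE[OF s] by eventually_elim (use box_vals[OF s] in \<open>auto simp: case_prod_beta\<close>)
    qed
  qed
  have "xc t = xc 0 + integral {0..t} (\<lambda>s. integral\<^sup>L (\<mu> s) (\<lambda>(y,v). xphit c ts s y v + F (\<mu> s) y v * xphix c ts s y v))"
    using W L[OF t] L[of 0] ts by simp
  also have "integral {0..t} (\<lambda>s. integral\<^sup>L (\<mu> s) (\<lambda>(y,v). xphit c ts s y v + F (\<mu> s) y v * xphix c ts s y v)) = integral {0..t} V"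
    by (rule integral_cong) (use R t in auto)
  finally show ?thesis .
qed

lemma V_cont: "continuous_on {0..ts} V"
  unfolding continuous_on_def
proof (intro ballI)
  fix t assume t: "t \<in> {0..ts}"
  have t0: "t \<ge> 0" using t by simp
  define c where "c = R0\<^sup>2 + 1"
  have c1: "c \<ge> 1" unfolding c_def by simp
  define g where "g = (\<lambda>p::real\<times>real. F (\<mu> t) (fst p) (snd p) * S (c - (fst p)\<^sup>2) * S (c - (snd p)\<^sup>2))"
  have cg: "continuous_on UNIV g" unfolding g_def by (intro continuous_intros F_cont2 mu_P2 t0)
  have g0: "(g \<longlongrightarrow> 0) at_infinity"
  proof (rule tendsto_eventually)
    show "eventually (\<lambda>p. g p = 0) at_infinity"
      unfolding eventually_at_infinity
    proof (intro exI[of _ "2*c"] allI impI)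
      fix p :: "real \<times> real" assume np: "2 * c \<le> norm p"
      have "norm p \<le> \<bar>fst p\<bar> + \<bar>snd p\<bar>" using norm_Pair_le[of "fst p" "snd p"] by simp
      then have "c \<le> \<bar>fst p\<bar> \<or> c \<le> \<bar>snd p\<bar>" using np by linarith
      moreover have "c \<le> z\<^sup>2" if "c \<le> \<bar>z\<bar>" for z :: real
      proof -
        have "c * 1 \<le> \<bar>z\<bar> * \<bar>z\<bar>" using that c1 by (intro mult_mono) auto
        then show ?thesis by (simp add: power2_eq_square)
      qed
      ultimately show "g p = 0" unfolding g_def by (auto simp: S_le0)
    qed
  qed
  have cint: "continuous_on {0..} (\<lambda>s. integral\<^sup>L (\<mu> s) g)"
    using sol cg g0 unfolding mv_solution_def by blast
  have geq: "integral\<^sup>L (\<mu> s) g = integral\<^sup>L (\<mu> s) (\<lambda>(y,v). F (\<mu> t) y v)" if s: "s \<in> {0..ts}" for s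
  proof -
    have s0: "s \<ge> 0" using s by simp
    show ?thesis
    proof (rule integral_cong_AE)
      show "g \<in> borel_measurable (\<mu> s)" by (rule meas_borel_cont[OF mu_basic(2)[OF s0] cg])
      show "(\<lambda>(y,v). F (\<mu> t) y v) \<in> borel_measurable (\<mu> s)"
        by (rule meas_cont2[OF mu_basic(2)[OF s0] F_cont2[OF mu_P2[OF t0]]])
      show "AE p in \<mu> s. g p = (case p of (y, v) \<Rightarrow> F (\<mu> t) y v)"
        using box_AE[OF s]
      proof eventually_elim
        case (elim p)
        have "S (c - (fst p)\<^sup>2) = 1" "S (c - (snd p)\<^sup>2) = 1"
          using box_sq[of "fst p"] box_sq[of "snd p"] elim unfolding c_def by (auto intro: S_ge1)
        then show ?case unfolding g_def by (simp add: case_prod_beta)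
      qed
    qed
  qed
  show "(V \<longlongrightarrow> V t) (at t within {0..ts})"
  proof (rule tendstoI)
    fix e :: real assume e: "e > 0"
    have KM: "\<kappa> * M > 0" using pos by simp
    have ev1: "eventually (\<lambda>s. s \<ge> 0 \<and> W1 (\<mu> s) (\<mu> t) \<le> ennreal (e / (4 * (\<kappa> * M)))) (at t within {0..ts})"
      by (rule filter_leD[OF at_le W1_cont[OF t0]]) (use e KM in auto)
    have "((\<lambda>s. integral\<^sup>L (\<mu> s) g) \<longlongrightarrow> integral\<^sup>L (\<mu> t) g) (at t within {0..})"
      using cint t0 unfolding continuous_on_def by auto
    then have "eventually (\<lambda>s. dist (integral\<^sup>L (\<mu> s) g) (integral\<^sup>L (\<mu> t) g) < e/2) (at t within {0..})"
      by (rule tendstoD) (use e in simp)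
    then have ev2: "eventually (\<lambda>s. dist (integral\<^sup>L (\<mu> s) g) (integral\<^sup>L (\<mu> t) g) < e/2) (at t within {0..ts})"
      by (rule filter_leD[OF at_le, rotated]) auto
    have ev3: "eventually (\<lambda>s. s \<in> {0..ts}) (at t within {0..ts})"
      by (simp add: eventually_at_filter)
    show "eventually (\<lambda>s. dist (V s) (V t) < e) (at t within {0..ts})"
      using ev1 ev2 ev3
    proof eventually_elim
      case (elim s)
      have s0: "s \<ge> 0" using elim by simp
      note E = elim
      have i1: "integrable (\<mu> s) (\<lambda>(y,v). F (\<mu> s) y v)" by (rule F_int[OF mu_P2[OF s0] elim(3)])
      have i2: "integrable (\<mu> s) (\<lambda>(y,v). F (\<mu> t) y v)" by (rule F_int[OF mu_P2[OF t0] elim(3)])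
      have "V s - integral\<^sup>L (\<mu> s) (\<lambda>(y,v). F (\<mu> t) y v)
          = integral\<^sup>L (\<mu> s) (\<lambda>p. (case p of (y,v) \<Rightarrow> F (\<mu> s) y v) - (case p of (y,v) \<Rightarrow> F (\<mu> t) y v))"
        unfolding V_def by (rule Bochner_Integration.integral_diff[OF i1 i2, symmetric])
      also have "\<bar>\<dots>\<bar> \<le> \<kappa> * M * (e / (4 * (\<kappa> * M)))"
      proof (rule abs_integral_le_AE[OF mu_basic(1)[OF s0]])
        show "AE p in \<mu> s. \<bar>(case p of (y,v) \<Rightarrow> F (\<mu> s) y v) - (case p of (y,v) \<Rightarrow> F (\<mu> t) y v)\<bar> \<le> \<kappa> * M * (e / (4 * (\<kappa> * M)))"
          using box_AE[OF elim(3)]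
        proof eventually_elim
          case (elim p)
          show ?case unfolding case_prod_beta
            by (rule A1_real[OF mu_P2[OF s0] mu_P2[OF t0]]) (use E elim e KM in auto)
        qed
      qed
      also have "\<kappa> * M * (e / (4 * (\<kappa> * M))) = e/4" using pos by (simp add: field_simps)
      finally have a: "\<bar>V s - integral\<^sup>L (\<mu> s) (\<lambda>(y,v). F (\<mu> t) y v)\<bar> \<le> e/4" .
      have b: "\<bar>integral\<^sup>L (\<mu> s) (\<lambda>(y,v). F (\<mu> t) y v) - V t\<bar> < e/2"
        using elim(2) geq[OF elim(3)] geq[OF t] unfolding V_def dist_real_def by simp
      show "dist (V s) (V t) < e" unfolding dist_real_def using a b e by linarith
    qed
  qed
qed

end


context setting begin

definition E0 where "E0 = \<kappa> * M * D + \<kappa> * I * D + I * \<gamma>"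
definition E1 where "E1 = ((\<kappa> + 1) * I + \<kappa> * M) * D + I * \<gamma>"

lemma E01: "E0 \<le> E1" "E1 < A" "0 \<le> E0"
  using D pos gamma_nonneg unfolding E0_def E1_def by (auto simp: algebra_simps)

definition a where "a t = F (mut t) (xc t) \<omega>c"

lemma a_ge: "a t \<ge> A" unfolding a_def mut_def by (rule A4)

lemma F_near:
  assumes t: "t \<in> {0..ts}" and p: "p \<in> msupp (\<mu> t)"
  shows "\<bar>F (\<mu> t) (fst p) (snd p) - a t\<bar> \<le> E0"
proof -
  have t0: "t \<ge> 0" using t by simp
  have v: "snd p \<in> \<Omega>" by (rule supp_snd[OF t0 p])
  have 1: "\<bar>F (\<mu> t) (fst p) (snd p) - F (mut t) (fst p) (snd p)\<bar> \<le> \<kappa> * M * D"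
    by (rule A1_real[OF mu_P2[OF t0] mut_P2 W1_mut[OF t] _ v]) (use D in simp)
  have 2: "\<bar>F (mut t) (fst p) (snd p) - F (mut t) (xc t) \<omega>c\<bar> \<le> \<kappa> * I * \<bar>fst p - xc t\<bar> + I * \<bar>snd p - \<omega>c\<bar>"
    by (rule F_lip2[OF mut_P2])
  have "\<kappa> * I * \<bar>fst p - xc t\<bar> \<le> \<kappa> * I * D" using supp_xc[OF t p] pos by (intro mult_left_mono) auto
  moreover have "I * \<bar>snd p - \<omega>c\<bar> \<le> I * \<gamma>" using omega_c_close[OF v] pos by (intro mult_left_mono) auto
  ultimately show ?thesis using 1 2 unfolding a_def E0_def by linarith
qed

lemma V_near:
  assumes t: "t \<in> {0..ts}"
  shows "\<bar>V t - a t\<bar> \<le> E0"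
proof -
  have t0: "t \<ge> 0" using t by simp
  interpret prob_space "\<mu> t" by (rule mu_basic(1)[OF t0])
  have "V t - a t = integral\<^sup>L (\<mu> t) (\<lambda>p. (case p of (y,v) \<Rightarrow> F (\<mu> t) y v) - a t)"
    unfolding V_def using F_int[OF mu_P2[OF t0] t] by (simp add: prob_space)
  also have "\<bar>\<dots>\<bar> \<le> E0"
  proof (rule abs_integral_le_AE[OF mu_basic(1)[OF t0]])
    show "AE p in \<mu> t. \<bar>(case p of (y,v) \<Rightarrow> F (\<mu> t) y v) - a t\<bar> \<le> E0"
      using box_AE[OF t]
    proof eventually_elim
      case (elim p)
      then show ?case using F_near[OF t, of p] by (simp add: case_prod_beta)
    qed
  qed
  finally show ?thesis .
qed

lemma V_pos: "t \<in> {0..ts} \<Longrightarrow> V t \<ge> A - E1"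
  using V_near[of t] a_ge[of t] E01 by linarith

lemma V_pos': "t \<in> {0..ts} \<Longrightarrow> V t > 0"
  using V_pos[of t] E01 by linarith

lemma xc_deriv_within:
  assumes t: "t \<in> {0..ts}"
  shows "((\<lambda>u. xc 0 + integral {0..u} V) has_real_derivative V t) (at t within {0..ts})"
proof -
  have "((\<lambda>u. integral {0..u} V) has_real_derivative V t) (at t within {0..ts})"
    using integral_has_vector_derivative[OF V_cont t] by (simp add: has_real_derivative_iff_has_vector_derivative)
  then have "((\<lambda>u. xc 0 + integral {0..u} V) has_real_derivative 0 + V t) (at t within {0..ts})"
    by (intro DERIV_add DERIV_const)
  then show ?thesis by simp
qed

lemma xc_cont: "continuous_on {0..ts} xc"
proof -
  have "continuous_on {0..ts} (\<lambda>u. xc 0 + integral {0..u} V)"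
    unfolding continuous_on_eq_continuous_within using xc_deriv_within DERIV_continuous by blast
  moreover have "continuous_on {0..ts} xc = continuous_on {0..ts} (\<lambda>u. xc 0 + integral {0..u} V)"
    by (rule continuous_on_cong[OF refl xc_int])
  ultimately show ?thesis by simp
qed

lemma xc_deriv:
  assumes t: "t \<in> {0<..<ts}"
  shows "(xc has_real_derivative V t) (at t)"
proof -
  have "t \<in> interior {0..ts}" using t by simp
  then have "((\<lambda>u. xc 0 + integral {0..u} V) has_real_derivative V t) (at t)"
    using xc_deriv_within[of t] t at_within_interior by fastforce
  then show ?thesis
  proof (rule has_field_derivative_transform_within_open[where S="{0<..<ts}"])
    fix x assume "x \<in> {0<..<ts}"
    then have "x \<in> {0..ts}" by simp
    then show "xc 0 + integral {0..x} V = xc x" by (rule xc_int[symmetric])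
  qed (use t in auto)
qed

lemma xc_less:
  assumes "0 \<le> u" "u < v" "v \<le> ts"
  shows "xc u < xc v"
proof (rule DERIV_pos_imp_increasing_open[OF assms(2)])
  fix x assume "u < x" "x < v"
  then have "x \<in> {0<..<ts}" using assms by auto
  then show "\<exists>y. (xc has_real_derivative y) (at x) \<and> 0 < y"
    using xc_deriv V_pos' by force
next
  show "continuous_on {u..v} xc" by (rule continuous_on_subset[OF xc_cont]) (use assms in auto)
qed

lemma xc_inj: "inj_on xc {0..ts}"
  unfolding inj_on_def
proof (intro ballI impI)
  fix u v assume "u \<in> {0..ts}" "v \<in> {0..ts}" "xc u = xc v"
  then show "u = v" using xc_less[of u v] xc_less[of v u] by (cases u v rule: linorder_cases) auto
qed

lemma xc_image: "xc ` {0..ts} = {xc 0..xc ts}"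
proof
  show "xc ` {0..ts} \<subseteq> {xc 0..xc ts}"
  proof
    fix y assume "y \<in> xc ` {0..ts}"
    then obtain u where u: "u \<in> {0..ts}" "y = xc u" by auto
    have "xc 0 \<le> xc u" using xc_less[of 0 u] u by (cases "u = 0") auto
    moreover have "xc u \<le> xc ts" using xc_less[of u ts] u by (cases "u = ts") auto
    ultimately show "y \<in> {xc 0..xc ts}" using u by auto
  qed
  show "{xc 0..xc ts} \<subseteq> xc ` {0..ts}"
  proof
    fix y assume "y \<in> {xc 0..xc ts}"
    then obtain u where "0 \<le> u" "u \<le> ts" "xc u = y"
      using IVT'[of xc 0 y ts] xc_cont ts by auto
    then show "y \<in> xc ` {0..ts}" by auto
  qed
qed

end


lemma final_alg:
  fixes N b \<Delta> V aa A E1 C1 KI D :: real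
  assumes V: "V > 0" and aa: "aa \<ge> A" and A: "A > 0" and E1: "E1 < A" "E1 \<ge> 0"
    and Va: "\<bar>V - aa\<bar> \<le> E1" and b: "\<bar>b\<bar> \<le> KI" and Dl: "\<bar>\<Delta>\<bar> \<le> D"
    and N: "N - b * \<Delta> \<le> C1" and C1: "C1 \<ge> 0" and KI: "KI \<ge> 0" and D: "D \<ge> 0"
  shows "N * inverse V \<le> b / aa * \<Delta> + (C1 / A + E1 * (KI * D + C1) / (A * (A - E1)))"
proof -
  have aa0: "aa > 0" using aa A by simp
  have AE: "A - E1 > 0" using E1 by simp
  have VA: "V \<ge> A - E1" using Va aa by linarith
  have id: "N * inverse V - b / aa * \<Delta> = (N - b * \<Delta>) / V + b * \<Delta> * (aa - V) / (aa * V)"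
    using V aa0 by (simp add: field_simps)
  have t1: "(N - b * \<Delta>) / V \<le> C1 / (A - E1)"
  proof -
    have "(N - b * \<Delta>) / V \<le> C1 / V" using N V by (simp add: divide_right_mono)
    also have "\<dots> \<le> C1 / (A - E1)" using C1 AE VA by (intro divide_left_mono) auto
    finally show ?thesis .
  qed
  have t2: "b * \<Delta> * (aa - V) / (aa * V) \<le> KI * D * E1 / (A * (A - E1))"
  proof -
    have "b * \<Delta> * (aa - V) \<le> \<bar>b * \<Delta> * (aa - V)\<bar>" by simp
    also have "\<dots> = \<bar>b\<bar> * \<bar>\<Delta>\<bar> * \<bar>aa - V\<bar>" by (simp add: abs_mult)
    also have "\<dots> \<le> KI * D * E1"
      using b Dl Va by (intro mult_mono) (auto simp: abs_minus_commute)
    finally have 1: "b * \<Delta> * (aa - V) \<le> KI * D * E1" .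
    have "b * \<Delta> * (aa - V) / (aa * V) \<le> KI * D * E1 / (aa * V)"
      using 1 aa0 V by (simp add: divide_right_mono)
    also have "\<dots> \<le> KI * D * E1 / (A * (A - E1))"
      using KI D E1 A AE aa VA by (intro divide_left_mono mult_mono mult_pos_pos mult_nonneg_nonneg) auto
    finally show ?thesis .
  qed
  have id2: "C1 / (A - E1) = C1 / A + C1 * E1 / (A * (A - E1))"
    using A AE by (simp add: field_simps)
  have id3: "E1 * (KI * D + C1) / (A * (A - E1)) = KI * D * E1 / (A * (A - E1)) + C1 * E1 / (A * (A - E1))"
    by (simp add: add_divide_distrib algebra_simps)
  show ?thesis using id t1 t2 id2 id3 by linarith
qed

lemma route_arith:
  fixes w w' u c g :: real
  assumes "\<bar>w - w'\<bar> \<le> g" "\<bar>w - c\<bar> \<le> g" "\<bar>w' - c\<bar> \<le> g"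
    and "u = w \<or> u = w'" and "\<bar>u - c\<bar> \<le> \<bar>w - c\<bar>" "\<bar>u - c\<bar> \<le> \<bar>w' - c\<bar>"
  shows "\<bar>w - u\<bar> + \<bar>w' - u\<bar> + 2 * \<bar>u - c\<bar> \<le> 2 * g"
  using assms by (auto simp: abs_if split: if_splits)

context setting begin

lemma N_bound:
  assumes t: "t \<in> {0..ts}" and xw: "(x, w) \<in> msupp (\<mu> 0)" and xw': "(x', w') \<in> msupp (\<mu> 0)"
  shows "F (\<mu> t) (X t x w) w - F (\<mu> t) (X t x' w') w'
         - Fx F (mut t) (xc t) \<omega>c * (X t x w - X t x' w') \<le> C1const \<kappa> M I \<gamma> D"
proof -
  have t0: "t \<ge> 0" using t by simp
  define Xa where "Xa = X t x w"
  define Xb where "Xb = X t x' w'"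
  define b where "b = Fx F (mut t) (xc t) \<omega>c"
  have wO: "w \<in> \<Omega>" using supp_snd[of 0 "(x,w)"] xw by simp
  have wO': "w' \<in> \<Omega>" using supp_snd[of 0 "(x',w')"] xw' by simp
  have Xa: "\<bar>Xa - xc t\<bar> \<le> D" unfolding Xa_def by (rule X_near[OF xw t])
  have Xb: "\<bar>Xb - xc t\<bar> \<le> D" unfolding Xb_def by (rule X_near[OF xw' t])
  have Dl: "\<bar>Xa - Xb\<bar> \<le> D" unfolding Xa_def Xb_def by (rule X_diff[OF xw xw' t])
  have m1: "P2nu \<nu> (\<mu> t)" by (rule mu_P2[OF t0])
  have m2: "P2nu \<nu> (mut t)" by (rule mut_P2)
  have KI: "\<kappa> * I \<ge> 0" "\<kappa> * M \<ge> 0" using pos by auto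
  have route: "F (\<mu> t) Xa w - F (\<mu> t) Xb w' - b * (Xa - Xb)
      \<le> I * \<bar>w - u\<bar> + I * \<bar>w' - u\<bar> + 2 * (I * \<bar>u - \<omega>c\<bar>) + \<kappa> * M * D * \<bar>Xa - Xb\<bar> + \<kappa> * I * D * \<bar>Xa - Xb\<bar>"
    if uO: "u \<in> \<Omega>" for u
  proof -
    have 1: "\<bar>F (\<mu> t) Xa w - F (\<mu> t) Xa u\<bar> \<le> I * \<bar>w - u\<bar>" by (rule F_lip_w[OF m1])
    have 3: "\<bar>F (\<mu> t) Xb u - F (\<mu> t) Xb w'\<bar> \<le> I * \<bar>w' - u\<bar>"
      using F_lip_w[OF m1, of Xb u w'] by (simp add: abs_minus_commute)
    have 2: "\<bar>(F (\<mu> t) Xa u - F (mut t) Xa u) - (F (\<mu> t) Xb u - F (mut t) Xb u)\<bar> \<le> \<kappa> * M * D * \<bar>Xa - Xb\<bar>"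
    proof (rule lip_deriv)
      fix y
      show "((\<lambda>y. F (\<mu> t) y u - F (mut t) y u) has_real_derivative Fx F (\<mu> t) y u - Fx F (mut t) y u) (at y)"
        by (intro DERIV_diff C2_facts(1)[OF m1] C2_facts(1)[OF m2])
      show "\<bar>Fx F (\<mu> t) y u - Fx F (mut t) y u\<bar> \<le> \<kappa> * M * D"
        by (rule A1x_real[OF m1 m2 W1_mut[OF t] _ uO]) (use D in simp)
    qed
    have 4: "\<bar>(F (mut t) Xa u - F (mut t) Xa \<omega>c) - (F (mut t) Xb u - F (mut t) Xb \<omega>c)\<bar> \<le> 2 * (I * \<bar>u - \<omega>c\<bar>)"
      using F_lip_w[OF m2, of Xa u \<omega>c] F_lip_w[OF m2, of Xb u \<omega>c] by (simp add: abs_minus_commute)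
    obtain z where z: "min Xb Xa \<le> z" "z \<le> max Xb Xa"
      "F (mut t) Xa \<omega>c - F (mut t) Xb \<omega>c = (Xa - Xb) * Fx F (mut t) z \<omega>c"
      using mvt_between[OF C2_facts(1)[OF m2], of Xb Xa \<omega>c] by blast
    have "\<bar>z - xc t\<bar> \<le> D" using z(1,2) Xa Xb by (auto simp: min_def max_def split: if_splits)
    then have "\<bar>Fx F (mut t) z \<omega>c - b\<bar> \<le> \<kappa> * I * D"
      unfolding b_def using Fx_lip_x[OF m2, of z \<omega>c "xc t"] KI
      by (smt (verit) mult_left_mono)
    then have "\<bar>(Xa - Xb) * (Fx F (mut t) z \<omega>c - b)\<bar> \<le> \<bar>Xa - Xb\<bar> * (\<kappa> * I * D)"
      by (simp add: abs_mult mult_left_mono)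
    then have 5: "\<bar>F (mut t) Xa \<omega>c - F (mut t) Xb \<omega>c - b * (Xa - Xb)\<bar> \<le> \<kappa> * I * D * \<bar>Xa - Xb\<bar>"
      using z(3) by (simp add: algebra_simps)
    show ?thesis using 1 2 3 4 5 by (simp add: abs_le_iff)
  qed
  have g1: "\<bar>w - w'\<bar> \<le> \<gamma>" by (rule Omega_diam[OF wO wO'])
  have g2: "\<bar>w - \<omega>c\<bar> \<le> \<gamma>" by (rule omega_c_close[OF wO])
  have g3: "\<bar>w' - \<omega>c\<bar> \<le> \<gamma>" by (rule omega_c_close[OF wO'])
  obtain u where u: "u = w \<or> u = w'" "\<bar>u - \<omega>c\<bar> \<le> \<bar>w - \<omega>c\<bar>" "\<bar>u - \<omega>c\<bar> \<le> \<bar>w' - \<omega>c\<bar>"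
    by (cases "\<bar>w - \<omega>c\<bar> \<le> \<bar>w' - \<omega>c\<bar>") auto
  have uO: "u \<in> \<Omega>" using u wO wO' by auto
  have ra: "\<bar>w - u\<bar> + \<bar>w' - u\<bar> + 2 * \<bar>u - \<omega>c\<bar> \<le> 2 * \<gamma>" by (rule route_arith[OF g1 g2 g3 u])
  have "I * \<bar>w - u\<bar> + I * \<bar>w' - u\<bar> + 2 * (I * \<bar>u - \<omega>c\<bar>) = I * (\<bar>w - u\<bar> + \<bar>w' - u\<bar> + 2 * \<bar>u - \<omega>c\<bar>)"
    by (simp add: algebra_simps)
  also have "\<dots> \<le> I * (2 * \<gamma>)" using ra pos by (intro mult_left_mono) auto
  finally have r1: "I * \<bar>w - u\<bar> + I * \<bar>w' - u\<bar> + 2 * (I * \<bar>u - \<omega>c\<bar>) \<le> 2 * I * \<gamma>" by simp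
  have "\<kappa> * M * D * \<bar>Xa - Xb\<bar> + \<kappa> * I * D * \<bar>Xa - Xb\<bar> = \<kappa> * (M + I) * D * \<bar>Xa - Xb\<bar>"
    by (simp add: algebra_simps)
  also have "\<dots> \<le> \<kappa> * (M + I) * D * D" using Dl pos D by (intro mult_left_mono) auto
  finally have r2: "\<kappa> * M * D * \<bar>Xa - Xb\<bar> + \<kappa> * I * D * \<bar>Xa - Xb\<bar> \<le> \<kappa> * (M + I) * D\<^sup>2"
    by (simp add: power2_eq_square)
  show ?thesis using route[OF uO] r1 r2 unfolding C1const_def Xa_def[symmetric] Xb_def[symmetric] b_def[symmetric]
    by linarith
qed

end


context setting begin

lemma main0:
  assumes s: "s \<in> {xc 0 <..< xc ts}" and xw: "(x, w) \<in> msupp (\<mu> 0)" and xw': "(x', w') \<in> msupp (\<mu> 0)"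
  shows "\<exists>d. ((\<lambda>r. X (the_inv_into {0..ts} xc r) x w - X (the_inv_into {0..ts} xc r) x' w') has_real_derivative d) (at s)
    \<and> d \<le> Fx F (return borel (xc (the_inv_into {0..ts} xc s)) \<Otimes>\<^sub>M \<nu>) (xc (the_inv_into {0..ts} xc s)) \<omega>c
          / F (return borel (xc (the_inv_into {0..ts} xc s)) \<Otimes>\<^sub>M \<nu>) (xc (the_inv_into {0..ts} xc s)) \<omega>c
          * (X (the_inv_into {0..ts} xc s) x w - X (the_inv_into {0..ts} xc s) x' w') + C2const A \<kappa> M I \<gamma> D"
proof -
  define \<tau> where "\<tau> = the_inv_into {0..ts} xc"
  define t where "t = \<tau> s"
  have xs: "s \<in> xc ` {0..ts}" using s xc_image by auto
  have xct: "xc t = s" unfolding t_def \<tau>_def by (rule f_the_inv_into_f[OF xc_inj xs])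
  have t01: "t \<in> {0..ts}" unfolding t_def \<tau>_def by (rule the_inv_into_into[OF xc_inj xs]) simp
  have t: "t \<in> {0<..<ts}"
  proof -
    have "t \<noteq> 0" using xct s by auto
    moreover have "t \<noteq> ts" using xct s by auto
    ultimately show ?thesis using t01 by auto
  qed
  have V0: "V t > 0" using V_pos'[OF t01] .
  have d\<tau>: "(\<tau> has_real_derivative inverse (V t)) (at s)"
  proof (rule DERIV_inverse_function[where f=xc and a="xc 0" and b="xc ts"])
    show "(xc has_real_derivative V t) (at (\<tau> s))" using xc_deriv[OF t] unfolding t_def by simp
    show "V t \<noteq> 0" using V0 by simp
    show "xc 0 < s" "s < xc ts" using s by auto
    show "xc (\<tau> y) = y" if "xc 0 < y" "y < xc ts" for y
      unfolding \<tau>_def by (rule f_the_inv_into_f[OF xc_inj]) (use that xc_image in auto)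
    have "continuous_on (xc ` {0..ts}) \<tau>" unfolding \<tau>_def
      by (rule continuous_on_inv_into[OF xc_cont compact_Icc xc_inj])
    then have "continuous_on {xc 0..xc ts} \<tau>" unfolding xc_image .
    then show "isCont \<tau> s" by (rule continuous_on_interior) (use s in simp)
  qed
  have dX: "((\<lambda>t. X t y v) has_real_derivative F (\<mu> t) (X t y v) v) (at t)" for y v
  proof -
    have "t \<in> interior {0..}" using t by simp
    then show ?thesis using flow[of t y v] t at_within_interior[of t "{0..}"] by auto
  qed
  have d1: "((\<lambda>r. X (\<tau> r) y v) has_real_derivative F (\<mu> t) (X t y v) v * inverse (V t)) (at s)" for y v
    using DERIV_chain2[OF dX[of y v, unfolded t_def] d\<tau>] unfolding t_def by simp
  define N where "N = F (\<mu> t) (X t x w) w - F (\<mu> t) (X t x' w') w'"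
  have dd: "((\<lambda>r. X (\<tau> r) x w - X (\<tau> r) x' w') has_real_derivative N * inverse (V t)) (at s)"
    using DERIV_diff[OF d1[of x w] d1[of x' w']] unfolding N_def by (simp add: algebra_simps)
  have Nb: "N - Fx F (mut t) (xc t) \<omega>c * (X t x w - X t x' w') \<le> C1const \<kappa> M I \<gamma> D"
    unfolding N_def by (rule N_bound[OF t01 xw xw'])
  have C1: "C1const \<kappa> M I \<gamma> D \<ge> 0" unfolding C1const_def using pos gamma_nonneg by simp
  have Va: "\<bar>V t - a t\<bar> \<le> E1" using V_near[OF t01] E01 by linarith
  have fin: "N * inverse (V t) \<le> Fx F (mut t) (xc t) \<omega>c / a t * (X t x w - X t x' w')
      + (C1const \<kappa> M I \<gamma> D / A + E1 * (\<kappa> * I * D + C1const \<kappa> M I \<gamma> D) / (A * (A - E1)))"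
    by (rule final_alg[OF V0 a_ge pos(1) E01(2) _ Va A2_x[OF mut_P2] X_diff[OF xw xw' t01] Nb C1 _ _])
       (use E01 pos D in auto)
  have C2eq: "C1const \<kappa> M I \<gamma> D / A + E1 * (\<kappa> * I * D + C1const \<kappa> M I \<gamma> D) / (A * (A - E1)) = C2const A \<kappa> M I \<gamma> D"
    unfolding C2const_def E1_def by (simp add: algebra_simps)
  show ?thesis
    using dd fin unfolding C2eq a_def mut_def t_def \<tau>_def by blast
qed

lemma main:
  "\<forall>s \<in> {xc 0 <..< xc ts}. \<forall>(x, w) \<in> msupp (\<mu> 0). \<forall>(x', w') \<in> msupp (\<mu> 0).
           (let \<tau> = the_inv_into {0..ts} xc; t = \<tau> s;
                \<mu>t = return borel (xc t) \<Otimes>\<^sub>M \<nu> in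
            \<exists>d. ((\<lambda>r. X (\<tau> r) x w - X (\<tau> r) x' w') has_real_derivative d) (at s)
              \<and> d \<le> Fx F \<mu>t (xc t) \<omega>c / F \<mu>t (xc t) \<omega>c * (X t x w - X t x' w')
                     + C2const A \<kappa> M I \<gamma> D)"
  unfolding Let_def using main0 by auto

end

theorem lemma4p2:
  fixes \<nu> :: "real measure"
    and F :: "(real \<times> real) measure \<Rightarrow> real \<Rightarrow> real \<Rightarrow> real"
    and \<mu> :: "real \<Rightarrow> (real \<times> real) measure"
    and X :: "real \<Rightarrow> real \<Rightarrow> real \<Rightarrow> real"
    and A B I M \<kappa> D t\<^sub>s :: real
  defines "\<Omega> \<equiv> msupp \<nu>"
    and "\<gamma> \<equiv> diameter (msupp \<nu>)"
    and "\<omega>\<^sub>c \<equiv> integral\<^sup>L \<nu> (\<lambda>w. w)"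
    and "x\<^sub>c \<equiv> (\<lambda>t. integral\<^sup>L (\<mu> t) fst)"
  assumes nu: "prob_space \<nu>" "sets \<nu> = sets borel" "integrable \<nu> (\<lambda>w. w\<^sup>2)" "bounded \<Omega>"
    and pos: "A > 0" "B > 0" "I > 0" "M > 0" "\<kappa> > 0"
    and A1_0: "\<And>\<mu>1 \<mu>2 x w. P2nu \<nu> \<mu>1 \<Longrightarrow> P2nu \<nu> \<mu>2 \<Longrightarrow> w \<in> \<Omega> \<Longrightarrow>
                 ennreal \<bar>F \<mu>1 x w - F \<mu>2 x w\<bar> \<le> ennreal (\<kappa> * M) * W1 \<mu>1 \<mu>2"
    and A1_1: "\<And>\<mu>1 \<mu>2 x w. P2nu \<nu> \<mu>1 \<Longrightarrow> P2nu \<nu> \<mu>2 \<Longrightarrow> w \<in> \<Omega> \<Longrightarrow>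
                 ennreal \<bar>Fx F \<mu>1 x w - Fx F \<mu>2 x w\<bar> \<le> ennreal (\<kappa> * M) * W1 \<mu>1 \<mu>2"
    and A2_C2: "\<And>\<mu>1. P2nu \<nu> \<mu>1 \<Longrightarrow> C2_R2 (F \<mu>1)"
    and A2_x: "\<And>\<mu>1 x w. P2nu \<nu> \<mu>1 \<Longrightarrow> \<bar>Fx F \<mu>1 x w\<bar> \<le> \<kappa> * I"
    and A2_xx: "\<And>\<mu>1 x w. P2nu \<nu> \<mu>1 \<Longrightarrow> \<bar>Fxx F \<mu>1 x w\<bar> \<le> \<kappa> * I"
    and A2_w: "\<And>\<mu>1 x w. P2nu \<nu> \<mu>1 \<Longrightarrow> \<bar>Fw F \<mu>1 x w\<bar> \<le> I"
    and A3: "\<And>\<mu>1 x w. P2nu \<nu> \<mu>1 \<Longrightarrow>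
               F (distr \<mu>1 borel (\<lambda>(y,v). (y + 2 * pi, v))) (x + 2 * pi) w = F \<mu>1 x w"
    and A4: "\<And>x. F (return borel x \<Otimes>\<^sub>M \<nu>) x \<omega>\<^sub>c \<ge> A"
    and A5: "integral {0..2 * pi}
               (\<lambda>x. Fx F (return borel x \<Otimes>\<^sub>M \<nu>) x \<omega>\<^sub>c / F (return borel x \<Otimes>\<^sub>M \<nu>) x \<omega>\<^sub>c)
             \<le> - \<kappa> * B"
    and D: "D > 0" "A - ((\<kappa> + 1) * I + \<kappa> * M) * D - I * \<gamma> > 0"
    and sol: "mv_solution \<nu> F \<mu>"
    and ts: "t\<^sub>s > 0"
    and diam: "\<And>t p q. t \<in> {0..t\<^sub>s} \<Longrightarrow> p \<in> msupp (\<mu> t) \<Longrightarrow> q \<in> msupp (\<mu> t) \<Longrightarrow>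
                 \<bar>fst p - fst q\<bar> \<le> D"
    and flow: "\<And>t x w. t \<ge> 0 \<Longrightarrow>
                 ((\<lambda>t. X t x w) has_real_derivative F (\<mu> t) (X t x w) w) (at t within {0..})"
    and flow0: "\<And>x w. X 0 x w = x"
  shows "\<forall>s \<in> {x\<^sub>c 0 <..< x\<^sub>c t\<^sub>s}. \<forall>(x, w) \<in> msupp (\<mu> 0). \<forall>(x', w') \<in> msupp (\<mu> 0).
           (let \<tau> = the_inv_into {0..t\<^sub>s} x\<^sub>c; t = \<tau> s;
                \<mu>t = return borel (x\<^sub>c t) \<Otimes>\<^sub>M \<nu> in
            \<exists>d. ((\<lambda>r. X (\<tau> r) x w - X (\<tau> r) x' w') has_real_derivative d) (at s)
              \<and> d \<le> Fx F \<mu>t (x\<^sub>c t) \<omega>\<^sub>c / F \<mu>t (x\<^sub>c t) \<omega>\<^sub>c * (X t x w - X t x' w')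
                     + C2const A \<kappa> M I \<gamma> D)"
proof -
  interpret setting \<nu> F \<mu> X A B I M \<kappa> D t\<^sub>s \<Omega> \<gamma> \<omega>\<^sub>c x\<^sub>c
    by (rule setting.intro) (fact assms(1-4)[THEN meta_eq_to_obj_eq] assms)+
  show ?thesis by (rule main)
qed


end
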